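(* Let $C'\ge 2$ and $m\ge 10$ be integers, let $f:\mathcal X\to\mathbb R^d$ be a fixed feature map and let $D_1,\dots,D_{C'}$ be class-conditional distributions on $\mathcal X$, with the standing assumptions listed in the context (in particular $d_{ij}>0$, finite fourth moments, and $d_{ij}^2+\frac{v_j-v_i}{m}>0$ for all $i\neq j$). For $i\neq j$ define $E^1_{ij}:=\frac{4}{m}\bigl(V_{ij}^2+\tfrac14 V_{ij}\bigr)$, $E^2_{ij}:=\frac{V_{ij}}{m}$, $E^3_{ij}:=\frac{\Theta_{ij}+2(m-1)V_{ij}^2}{m^3}$. Then the average multiclass error of the $m$-shot NCC classifier satisfies \[ \mathrm{err}^{\mathrm{NCC}}_{m}(f)\le \frac{1}{C'}\sum_{i=1}^{C'}\sum_{j\neq i}\frac{4\tilde V_{ij}}{\bigl(1+\frac{v_j-v_i}{m d_{ij}^2}\bigr)^2}+\frac{1}{C'}\sum_{i=1}^{C'}\sum_{j\neq i}\frac{\bigl(\sqrt{E^1_{ij}}+\sqrt{E^2_{ij}}+\sqrt{E^3_{ij}}\bigr)^2}{\bigl(1+\frac{v_j-v_i}{m d_{ij}^2}\bigr)^2}. \]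
   Context: Setup (nearest-class-centroid few-shot classification). Fix $f:\mathcal X\to\mathbb R^d$ and distributions $D_1,\dots,D_{C'}$ on $\mathcal X$. For a class $c$, let $z_c=f(x)$ with $x\sim D_c$, $\mu_c:=\mathbb E[z_c]$, $\Sigma_c:=\mathrm{Cov}(z_c)$, $v_c:=\mathrm{tr}(\Sigma_c)=\mathbb E\|z_c-\mu_c\|_2^2$, and $M_{4,c}:=\mathbb E\|z_c-\mu_c\|_2^4$, assumed finite. For each class $c$ draw a support set $x_{c,1},\dots,x_{c,m}$ i.i.d. from $D_c$, independently across classes; let $\widehat\mu_c:=\frac1m\sum_{s=1}^m f(x_{c,s})$. Given a test feature $z$, NCC predicts $\widehat y(z)\in\arg\min_{c}\|z-\widehat\mu_c\|_2^2$ with an arbitrary fixed tie-breaking rule. The error is $\mathrm{err}^{\mathrm{NCC}}_m(f):=\frac1{C'}\sum_{i=1}^{C'}\Pr(\widehat y(z_i)\neq i)$, where $z_i=f(x_i)$, $x_i\sim D_i$ independent of the support sets, and the probability is over both support sets and test point. For $i\neq j$: $d_{ij}:=\|\mu_j-\mu_i\|_2$ (assumed $>0$), $u_{ij}:=(\mu_j-\mu_i)/d_{ij}$, directional CDNV $\tilde V_{ij}:=\frac{u_{ij}^\top\Sigma_i u_{ij}}{d_{ij}^2}$, CDNV $V_{ij}:=\frac{v_i+v_j}{d_{ij}^2}$, and $\Theta_{ij}:=\frac{M_{4,i}+M_{4,j}}{d_{ij}^4}$. With $\Delta_{i\to j}:=\|z_i-\widehat\mu_j\|_2^2-\|z_i-\widehat\mu_i\|_2^2$,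 one has $\mathbb E[\Delta_{i\to j}]=d_{ij}^2+\frac{v_j-v_i}{m}$, which is assumed positive for all $i\neq j$. *)

theory Defs
  imports "HOL-Probability.Probability"
begin

text \<open>Classes are indexed by 0..C-1. D c is the class-conditional distribution of class c,
  f the feature map into real^'d.\<close>

definition cmean :: "(nat \<Rightarrow> 'x measure) \<Rightarrow> ('x \<Rightarrow> real^'d) \<Rightarrow> nat \<Rightarrow> real^'d" where
  "cmean D f c = (\<integral>x. f x \<partial>(D c))"

definition cvar :: "(nat \<Rightarrow> 'x measure) \<Rightarrow> ('x \<Rightarrow> real^'d) \<Rightarrow> nat \<Rightarrow> real" where
  "cvar D f c = (\<integral>x. (norm (f x - cmean D f c))^2 \<partial>(D c))"

definition cM4 :: "(nat \<Rightarrow> 'x measure) \<Rightarrow> ('x \<Rightarrow> real^'d) \<Rightarrow> nat \<Rightarrow> real" where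
  "cM4 D f c = (\<integral>x. (norm (f x - cmean D f c))^4 \<partial>(D c))"

definition cdist :: "(nat \<Rightarrow> 'x measure) \<Rightarrow> ('x \<Rightarrow> real^'d) \<Rightarrow> nat \<Rightarrow> nat \<Rightarrow> real" where
  "cdist D f i j = norm (cmean D f j - cmean D f i)"

definition cdir :: "(nat \<Rightarrow> 'x measure) \<Rightarrow> ('x \<Rightarrow> real^'d) \<Rightarrow> nat \<Rightarrow> nat \<Rightarrow> real^'d" where
  "cdir D f i j = (1 / cdist D f i j) *\<^sub>R (cmean D f j - cmean D f i)"

definition covq :: "(nat \<Rightarrow> 'x measure) \<Rightarrow> ('x \<Rightarrow> real^'d) \<Rightarrow> nat \<Rightarrow> real^'d \<Rightarrow> real" where
  "covq D f c u = (\<integral>x. (u \<bullet> (f x - cmean D f c))^2 \<partial>(D c))"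

definition dir_cdnv :: "(nat \<Rightarrow> 'x measure) \<Rightarrow> ('x \<Rightarrow> real^'d) \<Rightarrow> nat \<Rightarrow> nat \<Rightarrow> real" where
  "dir_cdnv D f i j = covq D f i (cdir D f i j) / (cdist D f i j)^2"

definition cdnv :: "(nat \<Rightarrow> 'x measure) \<Rightarrow> ('x \<Rightarrow> real^'d) \<Rightarrow> nat \<Rightarrow> nat \<Rightarrow> real" where
  "cdnv D f i j = (cvar D f i + cvar D f j) / (cdist D f i j)^2"

definition ctheta :: "(nat \<Rightarrow> 'x measure) \<Rightarrow> ('x \<Rightarrow> real^'d) \<Rightarrow> nat \<Rightarrow> nat \<Rightarrow> real" where
  "ctheta D f i j = (cM4 D f i + cM4 D f j) / (cdist D f i j)^4"

text \<open>NCC prediction with a fixed tie-breaking rule tb applied to the set of minimisers.\<close>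
definition ncc_pred :: "nat \<Rightarrow> (nat set \<Rightarrow> nat) \<Rightarrow> (nat \<Rightarrow> real^'d) \<Rightarrow> real^'d \<Rightarrow> nat" where
  "ncc_pred C tb mus z =
     tb {c \<in> {..<C}. \<forall>c'\<in>{..<C}. (norm (z - mus c))^2 \<le> (norm (z - mus c'))^2}"

text \<open>Joint law of the support sets (m i.i.d. draws per class, independent across classes)
  and an independent test point from class i.\<close>
definition ncc_space :: "nat \<Rightarrow> nat \<Rightarrow> (nat \<Rightarrow> 'x measure) \<Rightarrow> nat \<Rightarrow> ((nat \<Rightarrow> nat \<Rightarrow> 'x) \<times> 'x) measure" where
  "ncc_space C m D i = (PiM {..<C} (\<lambda>c. PiM {..<m} (\<lambda>s. D c))) \<Otimes>\<^sub>M D i"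

definition ncc_err :: "nat \<Rightarrow> nat \<Rightarrow> (nat \<Rightarrow> 'x measure) \<Rightarrow> ('x \<Rightarrow> real^'d) \<Rightarrow> (nat set \<Rightarrow> nat) \<Rightarrow> real" where
  "ncc_err C m D f tb =
     (1 / real C) * (\<Sum>i<C. measure (ncc_space C m D i)
        {\<omega> \<in> space (ncc_space C m D i).
           ncc_pred C tb (\<lambda>c. (1 / real m) *\<^sub>R (\<Sum>s<m. f (fst \<omega> c s))) (f (snd \<omega>)) \<noteq> i})"

end

theory Submission
  imports Defs
begin

lemma disc_aux:
  fixes a b c :: real
  assumes "\<And>t. 0 \<le> a - 2 * t * b + t^2 * c"
  shows "b^2 \<le> a * c"
proof (cases "c = 0")
  case True
  have "b = 0"
  proof (rule ccontr)
    assume "b \<noteq> 0"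
    have "0 \<le> a - 2 * ((a + 1) / (2 * b)) * b" using assms[of "(a+1)/(2*b)"] True by simp
    also have "\<dots> = -1" using \<open>b \<noteq> 0\<close> by (simp add: field_simps)
    finally show False by simp
  qed
  then show ?thesis using True by simp
next
  case False
  have c0: "c \<ge> 0"
  proof (rule ccontr)
    assume "\<not> c \<ge> 0" hence cn: "c < 0" by simp
    define t where "t = sqrt ((\<bar>a\<bar> + 1) / (- c))"
    have "(\<bar>a\<bar> + 1) / (- c) \<ge> 0" using cn by (intro divide_nonneg_pos) auto
    hence "t^2 = (\<bar>a\<bar> + 1) / (- c)" unfolding t_def by simp
    hence tc: "t^2 * c = - (\<bar>a\<bar> + 1)" using cn by (simp add: field_simps)
    have "0 \<le> a - 2 * t * b + t^2 * c" "0 \<le> a - 2 * (-t) * b + (-t)^2 * c" by (rule assms)+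
    hence "0 \<le> 2 * a + 2 * (t^2 * c)" by simp
    thus False using tc by simp
  qed
  with False have cp: "c > 0" by simp
  have "0 \<le> a - 2 * (b/c) * b + (b/c)^2 * c" by (rule assms)
  also have "\<dots> = a - b^2 / c" using cp by (simp add: field_simps power2_eq_square)
  finally show ?thesis using cp by (simp add: field_simps)
qed

lemma abs_mult_le_sq: "\<bar>u * v\<bar> \<le> u^2 + (v::real)^2"
proof -
  have "0 \<le> (\<bar>u\<bar> - \<bar>v\<bar>)^2" by simp
  hence "2 * (\<bar>u\<bar> * \<bar>v\<bar>) \<le> \<bar>u\<bar> * \<bar>u\<bar> + \<bar>v\<bar> * \<bar>v\<bar>"
    by (simp add: power2_eq_square algebra_simps)
  moreover have "0 \<le> \<bar>u\<bar> * \<bar>v\<bar>" by simp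
  ultimately have "\<bar>u\<bar> * \<bar>v\<bar> \<le> u * u + v * v" by linarith
  thus ?thesis by (simp add: abs_mult power2_eq_square)
qed

lemma (in finite_measure) L2_mult_integrable:
  fixes U V :: "'a \<Rightarrow> real"
  assumes [measurable]: "U \<in> borel_measurable M" "V \<in> borel_measurable M"
    and "integrable M (\<lambda>x. (U x)^2)" "integrable M (\<lambda>x. (V x)^2)"
  shows "integrable M (\<lambda>x. U x * V x)"
proof (rule Bochner_Integration.integrable_bound[of _ "\<lambda>x. (U x)^2 + (V x)^2"])
  show "integrable M (\<lambda>x. (U x)^2 + (V x)^2)" using assms by simp
  show "AE x in M. norm (U x * V x) \<le> norm ((U x)^2 + (V x)^2)"
  proof (rule AE_I2)
    fix x
    have "\<bar>U x * V x\<bar> \<le> (U x)^2 + (V x)^2" by (rule abs_mult_le_sq)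
    thus "norm (U x * V x) \<le> norm ((U x)^2 + (V x)^2)" by simp
  qed
qed simp

lemma (in finite_measure) CS_integral:
  fixes U V :: "'a \<Rightarrow> real"
  assumes [measurable]: "U \<in> borel_measurable M" "V \<in> borel_measurable M"
    and iU: "integrable M (\<lambda>x. (U x)^2)" and iV: "integrable M (\<lambda>x. (V x)^2)"
  shows "(\<integral>x. U x * V x \<partial>M)^2 \<le> (\<integral>x. (U x)^2 \<partial>M) * (\<integral>x. (V x)^2 \<partial>M)"
proof (rule disc_aux)
  fix t :: real
  have iUV: "integrable M (\<lambda>x. U x * V x)" by (rule L2_mult_integrable) (use assms in auto)
  have "0 \<le> (\<integral>x. (U x - t * V x)^2 \<partial>M)" by (rule integral_nonneg_AE) auto
  also have "(\<integral>x. (U x - t * V x)^2 \<partial>M) = (\<integral>x. (U x)^2 - 2 * t * (U x * V x) + t^2 * (V x)^2 \<partial>M)"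
    by (rule Bochner_Integration.integral_cong[OF refl]) (auto simp: power2_eq_square algebra_simps)
  also have "\<dots> = (\<integral>x. (U x)^2 \<partial>M) - 2 * t * (\<integral>x. U x * V x \<partial>M) + t^2 * (\<integral>x. (V x)^2 \<partial>M)"
    using iU iV iUV by simp
  finally show "0 \<le> (\<integral>x. (U x)^2 \<partial>M) - 2 * t * (\<integral>x. U x * V x \<partial>M) + t^2 * (\<integral>x. (V x)^2 \<partial>M)"
    .
qed

lemma sqrt_sum_sq_aux:
  fixes a b c :: real
  assumes "a \<ge> 0" "c \<ge> 0" "b^2 \<le> a * c"
  shows "a + 2 * b + c \<le> (sqrt a + sqrt c)^2"
proof -
  have "b \<le> sqrt (a * c)" using assms real_le_rsqrt by (metis abs_le_square_iff abs_ge_self order_trans real_sqrt_abs real_sqrt_le_iff)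
  thus ?thesis using assms by (simp add: power2_eq_square algebra_simps real_sqrt_mult)
qed

lemma (in finite_measure) minkowski2:
  fixes U V :: "'a \<Rightarrow> real"
  assumes [measurable]: "U \<in> borel_measurable M" "V \<in> borel_measurable M"
    and iU: "integrable M (\<lambda>x. (U x)^2)" and iV: "integrable M (\<lambda>x. (V x)^2)"
  shows "(\<integral>x. (U x + V x)^2 \<partial>M) \<le> (sqrt (\<integral>x. (U x)^2 \<partial>M) + sqrt (\<integral>x. (V x)^2 \<partial>M))^2"
proof -
  have iUV: "integrable M (\<lambda>x. U x * V x)" by (rule L2_mult_integrable) (use assms in auto)
  have "(\<integral>x. (U x + V x)^2 \<partial>M) = (\<integral>x. (U x)^2 + 2 * (U x * V x) + (V x)^2 \<partial>M)"
    by (rule Bochner_Integration.integral_cong[OF refl]) (auto simp: power2_eq_square algebra_simps)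
  also have "\<dots> = (\<integral>x. (U x)^2 \<partial>M) + 2 * (\<integral>x. U x * V x \<partial>M) + (\<integral>x. (V x)^2 \<partial>M)"
    using iU iV iUV by simp
  also have "\<dots> \<le> (sqrt (\<integral>x. (U x)^2 \<partial>M) + sqrt (\<integral>x. (V x)^2 \<partial>M))^2"
    by (rule sqrt_sum_sq_aux) (auto intro!: CS_integral integral_nonneg_AE simp: assms)
  finally show ?thesis .
qed

lemma distr_pair_snd':
  assumes "prob_space M" "prob_space N"
  shows "distr (M \<Otimes>\<^sub>M N) N snd = N"
proof -
  interpret M: prob_space M by fact
  interpret N: prob_space N by fact
  interpret pair_sigma_finite M N ..
  show ?thesis
  proof (intro measure_eqI)
    fix A assume A: "A \<in> sets (distr (M \<Otimes>\<^sub>M N) N snd)"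
    from A have "emeasure (distr (M \<Otimes>\<^sub>M N) N snd) A = emeasure (M \<Otimes>\<^sub>M N) (space M \<times> A)"
      by (auto simp add: emeasure_distr space_pair_measure dest: sets.sets_into_space intro!: arg_cong2[where f=emeasure])
    also have "\<dots> = emeasure M (space M) * emeasure N A"
      using A by (intro N.emeasure_pair_measure_Times) auto
    finally show "emeasure (distr (M \<Otimes>\<^sub>M N) N snd) A = emeasure N A"
      by (simp add: M.emeasure_space_1)
  qed simp
qed

lemma lift_fst:
  fixes \<phi> :: "'a \<Rightarrow> 'v::{banach, second_countable_topology}"
  assumes "prob_space M1" "prob_space M2" "integrable M1 \<phi>"
  shows "integrable (M1 \<Otimes>\<^sub>M M2) (\<lambda>z. \<phi> (fst z))"
    and "(\<integral>z. \<phi> (fst z) \<partial>(M1 \<Otimes>\<^sub>M M2)) = integral\<^sup>L M1 \<phi>"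
proof -
  interpret M2: prob_space M2 by fact
  have d: "distr (M1 \<Otimes>\<^sub>M M2) M1 fst = M1" by (rule M2.distr_pair_fst)
  have m: "\<phi> \<in> borel_measurable M1" using assms by auto
  show "integrable (M1 \<Otimes>\<^sub>M M2) (\<lambda>z. \<phi> (fst z))"
    using integrable_distr_eq[of fst "M1 \<Otimes>\<^sub>M M2" M1 \<phi>] d assms(3) m by simp
  show "(\<integral>z. \<phi> (fst z) \<partial>(M1 \<Otimes>\<^sub>M M2)) = integral\<^sup>L M1 \<phi>"
    using integral_distr[of fst "M1 \<Otimes>\<^sub>M M2" M1 \<phi>] d m by simp
qed

lemma lift_snd:
  fixes \<phi> :: "'a \<Rightarrow> 'v::{banach, second_countable_topology}"
  assumes "prob_space M1" "prob_space M2" "integrable M2 \<phi>"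
  shows "integrable (M1 \<Otimes>\<^sub>M M2) (\<lambda>z. \<phi> (snd z))"
    and "(\<integral>z. \<phi> (snd z) \<partial>(M1 \<Otimes>\<^sub>M M2)) = integral\<^sup>L M2 \<phi>"
proof -
  have d: "distr (M1 \<Otimes>\<^sub>M M2) M2 snd = M2" by (rule distr_pair_snd') fact+
  have m: "\<phi> \<in> borel_measurable M2" using assms by auto
  show "integrable (M1 \<Otimes>\<^sub>M M2) (\<lambda>z. \<phi> (snd z))"
    using integrable_distr_eq[of snd "M1 \<Otimes>\<^sub>M M2" M2 \<phi>] d assms(3) m by simp
  show "(\<integral>z. \<phi> (snd z) \<partial>(M1 \<Otimes>\<^sub>M M2)) = integral\<^sup>L M2 \<phi>"
    using integral_distr[of snd "M1 \<Otimes>\<^sub>M M2" M2 \<phi>] d m by simp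
qed

lemma prod_inner:
  fixes \<phi> \<psi> :: "_ \<Rightarrow> 'v::euclidean_space"
  assumes "prob_space M1" "prob_space M2" and i1: "integrable M1 \<phi>" and i2: "integrable M2 \<psi>"
  shows "integrable (M1 \<Otimes>\<^sub>M M2) (\<lambda>z. \<phi> (fst z) \<bullet> \<psi> (snd z))"
    and "(\<integral>z. \<phi> (fst z) \<bullet> \<psi> (snd z) \<partial>(M1 \<Otimes>\<^sub>M M2)) = integral\<^sup>L M1 \<phi> \<bullet> integral\<^sup>L M2 \<psi>"
proof -
  interpret M1: prob_space M1 by fact
  interpret M2: prob_space M2 by fact
  interpret pair_sigma_finite M1 M2 ..
  have [measurable]: "\<phi> \<in> borel_measurable M1" "\<psi> \<in> borel_measurable M2" using i1 i2 by auto
  show int: "integrable (M1 \<Otimes>\<^sub>M M2) (\<lambda>z. \<phi> (fst z) \<bullet> \<psi> (snd z))"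
  proof (rule Fubini_integrable)
    show "(\<lambda>z. \<phi> (fst z) \<bullet> \<psi> (snd z)) \<in> borel_measurable (M1 \<Otimes>\<^sub>M M2)" by measurable
    show "AE x in M1. integrable M2 (\<lambda>y. \<phi> (fst (x, y)) \<bullet> \<psi> (snd (x, y)))"
      using i2 by simp
    show "integrable M1 (\<lambda>x. \<integral>y. norm (\<phi> (fst (x, y)) \<bullet> \<psi> (snd (x, y))) \<partial>M2)"
    proof (rule Bochner_Integration.integrable_bound[of _ "\<lambda>x. norm (\<phi> x) * (\<integral>y. norm (\<psi> y) \<partial>M2)"])
      show "integrable M1 (\<lambda>x. norm (\<phi> x) * (\<integral>y. norm (\<psi> y) \<partial>M2))" using i1 by simp
      show "(\<lambda>x. \<integral>y. norm (\<phi> (fst (x, y)) \<bullet> \<psi> (snd (x, y))) \<partial>M2) \<in> borel_measurable M1"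
        by measurable
      show "AE x in M1. norm (\<integral>y. norm (\<phi> (fst (x, y)) \<bullet> \<psi> (snd (x, y))) \<partial>M2)
              \<le> norm (norm (\<phi> x) * (\<integral>y. norm (\<psi> y) \<partial>M2))"
      proof (rule AE_I2)
        fix x
        have "(\<integral>y. norm (\<phi> x \<bullet> \<psi> y) \<partial>M2) \<le> (\<integral>y. norm (\<phi> x) * norm (\<psi> y) \<partial>M2)"
          using i2 by (intro integral_mono) (auto simp: Cauchy_Schwarz_ineq2)
        also have "\<dots> = norm (\<phi> x) * (\<integral>y. norm (\<psi> y) \<partial>M2)" by simp
        finally show "norm (\<integral>y. norm (\<phi> (fst (x, y)) \<bullet> \<psi> (snd (x, y))) \<partial>M2)
              \<le> norm (norm (\<phi> x) * (\<integral>y. norm (\<psi> y) \<partial>M2))"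
          by (simp add: integral_nonneg_AE)
      qed
    qed
  qed
  have "(\<integral>z. \<phi> (fst z) \<bullet> \<psi> (snd z) \<partial>(M1 \<Otimes>\<^sub>M M2)) = (\<integral>x. (\<integral>y. \<phi> x \<bullet> \<psi> y \<partial>M2) \<partial>M1)"
    using integral_fst'[OF int] by simp
  also have "\<dots> = (\<integral>x. \<phi> x \<bullet> integral\<^sup>L M2 \<psi> \<partial>M1)"
    using i2 by simp
  also have "\<dots> = integral\<^sup>L M1 \<phi> \<bullet> integral\<^sup>L M2 \<psi>"
    using i1 by simp
  finally show "(\<integral>z. \<phi> (fst z) \<bullet> \<psi> (snd z) \<partial>(M1 \<Otimes>\<^sub>M M2)) = integral\<^sup>L M1 \<phi> \<bullet> integral\<^sup>L M2 \<psi>" .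
qed

lemma prod_real:
  fixes \<phi> \<psi> :: "_ \<Rightarrow> real"
  assumes "prob_space M1" "prob_space M2" and i1: "integrable M1 \<phi>" and i2: "integrable M2 \<psi>"
  shows "integrable (M1 \<Otimes>\<^sub>M M2) (\<lambda>z. \<phi> (fst z) * \<psi> (snd z))"
    and "(\<integral>z. \<phi> (fst z) * \<psi> (snd z) \<partial>(M1 \<Otimes>\<^sub>M M2)) = integral\<^sup>L M1 \<phi> * integral\<^sup>L M2 \<psi>"
  using prod_inner[OF assms] by (simp_all add: inner_real_def)

lemma pow_le_1_4: "0 \<le> (t::real) \<Longrightarrow> n \<le> 4 \<Longrightarrow> t ^ n \<le> 1 + t ^ 4"
proof (cases "t \<le> 1")
  case True
  assume "0 \<le> t" "n \<le> 4"
  hence "t ^ n \<le> 1" using True by (simp add: power_le_one)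
  thus ?thesis by (smt (verit) zero_le_power \<open>0 \<le> t\<close>)
next
  case False
  assume "0 \<le> t" "n \<le> 4"
  hence "t ^ n \<le> t ^ 4" using False by (intro power_increasing) auto
  thus ?thesis by simp
qed

lemma norm_add_sq: "(norm (a + b))^2 = (norm a)^2 + 2 * (a \<bullet> b) + (norm (b::'v::real_inner))^2"
  by (simp add: power2_norm_eq_inner inner_add inner_commute algebra_simps)

lemma sum4_le: "(s + t)^4 \<le> 8 * (s^4 + t^4)" for s t :: real
proof -
  have a: "(x + y)^2 \<le> 2 * (x^2 + y^2)" for x y :: real
  proof -
    have "0 \<le> (x - y)^2" by simp
    thus ?thesis by (simp add: power2_eq_square algebra_simps)
  qed
  have "(s+t)^4 = ((s+t)^2)^2" by simp
  also have "\<dots> \<le> (2 * (s^2 + t^2))^2" using a[of s t] by (intro power_mono) auto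
  also have "\<dots> = 4 * (s^2 + t^2)^2" by (simp add: power2_eq_square algebra_simps)
  also have "\<dots> \<le> 4 * (2 * ((s^2)^2 + (t^2)^2))" using a[of "s^2" "t^2"] by simp
  finally show ?thesis by simp
qed

lemma norm_add_4: "(norm (a + b))^4 \<le> 8 * ((norm a)^4 + (norm (b::'v::real_normed_vector))^4)"
proof -
  have "(norm (a + b))^4 \<le> (norm a + norm b)^4" by (intro power_mono norm_triangle_ineq) auto
  also have "\<dots> \<le> 8 * ((norm a)^4 + (norm b)^4)" by (rule sum4_le)
  finally show ?thesis .
qed

locale cls = prob_space P for P :: "'a measure" +
  fixes g :: "'a \<Rightarrow> 'v::euclidean_space"
  assumes g_meas[measurable]: "g \<in> borel_measurable P"
    and g4: "integrable P (\<lambda>x. (norm (g x))^4)"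
    and g0: "integral\<^sup>L P g = 0"
begin

definition "vv = (\<integral>x. (norm (g x))^2 \<partial>P)"
definition "MM = (\<integral>x. (norm (g x))^4 \<partial>P)"
definition "PP (k::nat) = PiM {..<k} (\<lambda>_. P)"
definition "S (k::nat) (x::nat \<Rightarrow> 'a) = (\<Sum>s<k. g (x s))"

lemma moment_integrable:
  fixes F :: "'a \<Rightarrow> 'w::{banach, second_countable_topology}"
  assumes [measurable]: "F \<in> borel_measurable P" and "\<And>x. norm (F x) \<le> 1 + (norm (g x))^4"
  shows "integrable P F"
  by (rule Bochner_Integration.integrable_bound[of _ "\<lambda>x. 1 + (norm (g x))^4"])
     (use assms g4 in auto)

lemma g2: "integrable P (\<lambda>x. (norm (g x))^2)"
  by (rule moment_integrable) (auto intro: pow_le_1_4)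
lemma g1: "integrable P g"
  by (rule moment_integrable) (auto intro: pow_le_1_4[where n=1, simplified])
lemma g3: "integrable P (\<lambda>x. (norm (g x))^2 *\<^sub>R g x)"
proof (rule moment_integrable)
  fix x show "norm ((norm (g x))^2 *\<^sub>R g x) \<le> 1 + (norm (g x))^4"
    using pow_le_1_4[of "norm (g x)" 3] by (simp add: power3_eq_cube power2_eq_square)
qed simp

lemma vv_nonneg: "vv \<ge> 0" unfolding vv_def by (rule integral_nonneg_AE) auto
lemma MM_nonneg: "MM \<ge> 0" unfolding MM_def by (rule integral_nonneg_AE) auto

lemma prob_PP: "prob_space (PP k)"
  unfolding PP_def by (rule prob_space_PiM) (rule prob_space_axioms)

lemma S_meas[measurable]: "S k \<in> borel_measurable (PP k)"
  unfolding S_def PP_def by measurable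

lemma PP_Suc: "PP (Suc k) = distr (P \<Otimes>\<^sub>M PP k) (PP (Suc k)) (\<lambda>(x, X). X(k := x))"
proof -
  have "distr ((\<lambda>_. P) k \<Otimes>\<^sub>M (\<Pi>\<^sub>M i\<in>{..<k}. (\<lambda>_. P) i)) (\<Pi>\<^sub>M i\<in>insert k {..<k}. (\<lambda>_. P) i) (\<lambda>(x, X). X(k := x)) =
    (\<Pi>\<^sub>M i\<in>insert k {..<k}. (\<lambda>_. P) i)"
    by (rule distr_pair_PiM_eq_PiM) (auto intro: prob_space_axioms)
  thus ?thesis unfolding PP_def by (simp add: lessThan_Suc)
qed

lemma upd_meas[measurable]: "(\<lambda>(x, X). X(k := x)) \<in> measurable (P \<Otimes>\<^sub>M PP k) (PP (Suc k))"
  unfolding PP_def lessThan_Suc by measurable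

lemma PP_Suc_integrable:
  fixes F :: "_ \<Rightarrow> 'w::{banach, second_countable_topology}"
  assumes [measurable]: "F \<in> borel_measurable (PP (Suc k))"
  shows "integrable (PP (Suc k)) F \<longleftrightarrow> integrable (P \<Otimes>\<^sub>M PP k) (\<lambda>z. F ((snd z)(k := fst z)))"
proof -
  have "integrable (PP (Suc k)) F = integrable (distr (P \<Otimes>\<^sub>M PP k) (PP (Suc k)) (\<lambda>(x, X). X(k := x))) F"
    by (subst PP_Suc[symmetric]) (rule refl)
  also have "\<dots> = integrable (P \<Otimes>\<^sub>M PP k) (\<lambda>z. F ((\<lambda>(x, X). X(k := x)) z))"
    by (rule integrable_distr_eq) measurable
  finally show ?thesis by (simp add: case_prod_beta)
qed

lemma PP_Suc_integral:
  fixes F :: "_ \<Rightarrow> 'w::{banach, second_countable_topology}"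
  assumes [measurable]: "F \<in> borel_measurable (PP (Suc k))"
  shows "integral\<^sup>L (PP (Suc k)) F = (\<integral>z. F ((snd z)(k := fst z)) \<partial>(P \<Otimes>\<^sub>M PP k))"
proof -
  have "integral\<^sup>L (PP (Suc k)) F = integral\<^sup>L (distr (P \<Otimes>\<^sub>M PP k) (PP (Suc k)) (\<lambda>(x, X). X(k := x))) F"
    by (subst PP_Suc[symmetric]) (rule refl)
  also have "\<dots> = (\<integral>z. F ((\<lambda>(x, X). X(k := x)) z) \<partial>(P \<Otimes>\<^sub>M PP k))"
    by (rule integral_distr) measurable
  finally show ?thesis by (simp add: case_prod_beta)
qed

lemma S_upd: "S (Suc k) (X(k := x)) = g x + S k X"
  unfolding S_def by (simp add: add.commute)

lemma S_facts:
  fixes k :: nat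
  shows "integrable (PP k) (\<lambda>x. (norm (S k x))^4) \<and> integral\<^sup>L (PP k) (S k) = 0 \<and>
   (\<integral>x. (norm (S k x))^2 \<partial>PP k) = k * vv \<and>
   (\<integral>x. (norm (S k x))^4 \<partial>PP k) \<le> real k * MM + 3 * real k * (real k - 1) * vv^2"
proof (induction k)
  case 0
  have "S 0 = (\<lambda>x. 0)" by (simp add: S_def fun_eq_iff)
  thus ?case by simp
next
  case (Suc k)
  note IH = Suc.IH
  let ?Q = "PP k"
  interpret Q: prob_space ?Q by (rule prob_PP)
  have pP: "prob_space P" by (rule prob_space_axioms)
  have pQ: "prob_space ?Q" by (rule prob_PP)
  interpret PQ: pair_sigma_finite P ?Q ..
  have iS4: "integrable ?Q (\<lambda>x. (norm (S k x))^4)" using IH by simp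
  have iS: "integrable ?Q (S k)"
    by (rule Bochner_Integration.integrable_bound[of _ "\<lambda>x. 1 + (norm (S k x))^4"])
       (use iS4 in \<open>auto intro!: AE_I2 pow_le_1_4[where n=1, simplified]\<close>)
  have iS2: "integrable ?Q (\<lambda>x. (norm (S k x))^2)"
    by (rule Bochner_Integration.integrable_bound[of _ "\<lambda>x. 1 + (norm (S k x))^4"])
       (use iS4 in \<open>auto intro!: AE_I2 pow_le_1_4\<close>)
  have iS3: "integrable ?Q (\<lambda>x. (norm (S k x))^2 *\<^sub>R S k x)"
  proof (rule Bochner_Integration.integrable_bound[of _ "\<lambda>x. 1 + (norm (S k x))^4"])
    show "AE x in ?Q. norm ((norm (S k x))^2 *\<^sub>R S k x) \<le> norm (1 + (norm (S k x))^4)"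
    proof (rule AE_I2)
      fix x show "norm ((norm (S k x))^2 *\<^sub>R S k x) \<le> norm (1 + (norm (S k x))^4)"
        using pow_le_1_4[of "norm (S k x)" 3] by (simp add: power3_eq_cube power2_eq_square)
    qed
  qed (use iS4 in auto)
  have S0: "integral\<^sup>L ?Q (S k) = 0" and S2: "(\<integral>x. (norm (S k x))^2 \<partial>?Q) = k * vv"
    and S4: "(\<integral>x. (norm (S k x))^4 \<partial>?Q) \<le> real k * MM + 3 * real k * (real k - 1) * vv^2" using IH by auto
  define a where "a z = S k (snd z)" for z :: "'a \<times> (nat \<Rightarrow> 'a)"
  define b where "b z = g (fst z)" for z :: "'a \<times> (nat \<Rightarrow> 'a)"
  have [measurable]: "a \<in> borel_measurable (P \<Otimes>\<^sub>M ?Q)" "b \<in> borel_measurable (P \<Otimes>\<^sub>M ?Q)"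
    unfolding a_def b_def by measurable
  have up: "S (Suc k) ((snd z)(k := fst z)) = b z + a z" for z
    unfolding a_def b_def by (simp add: S_upd)
  have ia4: "integrable (P \<Otimes>\<^sub>M ?Q) (\<lambda>z. (norm (a z))^4)"
    unfolding a_def by (rule lift_snd[OF pP pQ iS4])
  have ib4: "integrable (P \<Otimes>\<^sub>M ?Q) (\<lambda>z. (norm (b z))^4)"
    unfolding b_def by (rule lift_fst[OF pP pQ g4])
  have ia: "integrable (P \<Otimes>\<^sub>M ?Q) a" unfolding a_def by (rule lift_snd[OF pP pQ iS])
  have ib: "integrable (P \<Otimes>\<^sub>M ?Q) b" unfolding b_def by (rule lift_fst[OF pP pQ g1])
  have ia2: "integrable (P \<Otimes>\<^sub>M ?Q) (\<lambda>z. (norm (a z))^2)" unfolding a_def by (rule lift_snd[OF pP pQ iS2])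
  have ib2: "integrable (P \<Otimes>\<^sub>M ?Q) (\<lambda>z. (norm (b z))^2)" unfolding b_def by (rule lift_fst[OF pP pQ g2])
  have Ia: "integral\<^sup>L (P \<Otimes>\<^sub>M ?Q) a = 0" unfolding a_def using lift_snd(2)[OF pP pQ iS] S0 by simp
  have Ib: "integral\<^sup>L (P \<Otimes>\<^sub>M ?Q) b = 0" unfolding b_def using lift_fst(2)[OF pP pQ g1] g0 by simp
  have Ia2: "(\<integral>z. (norm (a z))^2 \<partial>(P \<Otimes>\<^sub>M ?Q)) = k * vv" unfolding a_def using lift_snd(2)[OF pP pQ iS2] S2 by simp
  have Ib2: "(\<integral>z. (norm (b z))^2 \<partial>(P \<Otimes>\<^sub>M ?Q)) = vv" unfolding b_def vv_def using lift_fst(2)[OF pP pQ g2] by simp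
  have Ia4: "(\<integral>z. (norm (a z))^4 \<partial>(P \<Otimes>\<^sub>M ?Q)) \<le> real k * MM + 3 * real k * (real k - 1) * vv^2"
    unfolding a_def using lift_snd(2)[OF pP pQ iS4] S4 by simp
  have Ib4: "(\<integral>z. (norm (b z))^4 \<partial>(P \<Otimes>\<^sub>M ?Q)) = MM" unfolding b_def MM_def using lift_fst(2)[OF pP pQ g4] by simp
  have iab: "integrable (P \<Otimes>\<^sub>M ?Q) (\<lambda>z. b z \<bullet> a z)" and Iab: "(\<integral>z. b z \<bullet> a z \<partial>(P \<Otimes>\<^sub>M ?Q)) = 0"
    unfolding a_def b_def using prod_inner[OF pP pQ g1 iS] S0 by auto
  have iab2: "integrable (P \<Otimes>\<^sub>M ?Q) (\<lambda>z. (norm (b z))^2 * (norm (a z))^2)"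
    and Iab2: "(\<integral>z. (norm (b z))^2 * (norm (a z))^2 \<partial>(P \<Otimes>\<^sub>M ?Q)) = vv * (k * vv)"
    unfolding a_def b_def using prod_real[OF pP pQ g2 iS2] S2 vv_def by auto
  have iT5: "integrable (P \<Otimes>\<^sub>M ?Q) (\<lambda>z. b z \<bullet> ((norm (a z))^2 *\<^sub>R a z))"
    and IT5: "(\<integral>z. b z \<bullet> ((norm (a z))^2 *\<^sub>R a z) \<partial>(P \<Otimes>\<^sub>M ?Q)) = 0"
    unfolding a_def b_def using prod_inner[OF pP pQ g1 iS3] g0 by auto
  have iT6: "integrable (P \<Otimes>\<^sub>M ?Q) (\<lambda>z. ((norm (b z))^2 *\<^sub>R b z) \<bullet> a z)"
    and IT6: "(\<integral>z. ((norm (b z))^2 *\<^sub>R b z) \<bullet> a z \<partial>(P \<Otimes>\<^sub>M ?Q)) = 0"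
    unfolding a_def b_def using prod_inner[OF pP pQ g3 iS] S0 by auto
  have iab_sq: "integrable (P \<Otimes>\<^sub>M ?Q) (\<lambda>z. (b z \<bullet> a z)^2)"
  proof (rule Bochner_Integration.integrable_bound[OF iab2])
    show "AE z in P \<Otimes>\<^sub>M ?Q. norm ((b z \<bullet> a z)^2) \<le> norm ((norm (b z))^2 * (norm (a z))^2)"
    proof (rule AE_I2)
      fix z
      have "\<bar>b z \<bullet> a z\<bar> \<le> norm (b z) * norm (a z)" by (rule Cauchy_Schwarz_ineq2)
      hence "\<bar>b z \<bullet> a z\<bar>^2 \<le> (norm (b z) * norm (a z))^2" by (intro power_mono) auto
      thus "norm ((b z \<bullet> a z)^2) \<le> norm ((norm (b z))^2 * (norm (a z))^2)"
        by (simp add: power_mult_distrib)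
    qed
  qed measurable
  have Iab_sq: "(\<integral>z. (b z \<bullet> a z)^2 \<partial>(P \<Otimes>\<^sub>M ?Q)) \<le> vv * (k * vv)"
  proof -
    have "(\<integral>z. (b z \<bullet> a z)^2 \<partial>(P \<Otimes>\<^sub>M ?Q)) \<le> (\<integral>z. (norm (b z))^2 * (norm (a z))^2 \<partial>(P \<Otimes>\<^sub>M ?Q))"
    proof (rule integral_mono[OF iab_sq iab2])
      fix z
      have "\<bar>b z \<bullet> a z\<bar> \<le> norm (b z) * norm (a z)" by (rule Cauchy_Schwarz_ineq2)
      hence "\<bar>b z \<bullet> a z\<bar>^2 \<le> (norm (b z) * norm (a z))^2" by (intro power_mono) auto
      thus "(b z \<bullet> a z)^2 \<le> (norm (b z))^2 * (norm (a z))^2" by (simp add: power_mult_distrib)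
    qed
    thus ?thesis using Iab2 by simp
  qed
  have meas4: "(\<lambda>x. (norm (S (Suc k) x))^4) \<in> borel_measurable (PP (Suc k))" by measurable
  have meas2: "(\<lambda>x. (norm (S (Suc k) x))^2) \<in> borel_measurable (PP (Suc k))" by measurable
  have e2: "(norm (b z + a z))^2 = (norm (b z))^2 + 2 * (b z \<bullet> a z) + (norm (a z))^2" for z
    by (rule norm_add_sq)
  have e4: "(norm (b z + a z))^4 = (norm (b z))^4 + (norm (a z))^4 + 4 * (b z \<bullet> a z)^2
      + 2 * ((norm (b z))^2 * (norm (a z))^2) + 4 * (b z \<bullet> ((norm (a z))^2 *\<^sub>R a z))
      + 4 * (((norm (b z))^2 *\<^sub>R b z) \<bullet> a z)" for z
  proof -
    have "(norm (b z + a z))^4 = ((norm (b z + a z))^2)^2" by simp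
    also have "\<dots> = ((norm (b z))^2 + 2 * (b z \<bullet> a z) + (norm (a z))^2)^2" by (simp add: e2)
    also have "\<dots> = (norm (b z))^4 + (norm (a z))^4 + 4 * (b z \<bullet> a z)^2
      + 2 * ((norm (b z))^2 * (norm (a z))^2) + 4 * (b z \<bullet> ((norm (a z))^2 *\<^sub>R a z))
      + 4 * (((norm (b z))^2 *\<^sub>R b z) \<bullet> a z)"
      by (simp add: power2_eq_square power4_eq_xxxx algebra_simps)
    finally show ?thesis .
  qed
  have int4: "integrable (P \<Otimes>\<^sub>M ?Q) (\<lambda>z. (norm (b z + a z))^4)"
    unfolding e4 using ib4 ia4 iab_sq iab2 iT5 iT6 by simp
  have I4: "(\<integral>z. (norm (b z + a z))^4 \<partial>(P \<Otimes>\<^sub>M ?Q)) =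
     MM + (\<integral>z. (norm (a z))^4 \<partial>(P \<Otimes>\<^sub>M ?Q)) + 4 * (\<integral>z. (b z \<bullet> a z)^2 \<partial>(P \<Otimes>\<^sub>M ?Q)) + 2 * (vv * (k * vv))"
    unfolding e4 using ib4 ia4 iab_sq iab2 iT5 iT6 Ib4 Iab2 IT5 IT6 by simp
  have I2: "(\<integral>z. (norm (b z + a z))^2 \<partial>(P \<Otimes>\<^sub>M ?Q)) = vv + k * vv"
    unfolding e2 using ib2 ia2 iab Ib2 Ia2 Iab by simp
  show ?case
  proof (intro conjI)
    show "integrable (PP (Suc k)) (\<lambda>x. (norm (S (Suc k) x))^4)"
      using int4 by (simp add: PP_Suc_integrable[OF meas4] up)
    show "integral\<^sup>L (PP (Suc k)) (S (Suc k)) = 0"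
      using ia ib Ia Ib by (simp add: PP_Suc_integral up)
    show "(\<integral>x. (norm (S (Suc k) x))^2 \<partial>PP (Suc k)) = real (Suc k) * vv"
      using I2 by (simp add: PP_Suc_integral[OF meas2] up algebra_simps)
    show "(\<integral>x. (norm (S (Suc k) x))^4 \<partial>PP (Suc k)) \<le> real (Suc k) * MM + 3 * real (Suc k) * (real (Suc k) - 1) * vv^2"
      using I4 Ia4 Iab_sq by (simp add: PP_Suc_integral[OF meas4] up algebra_simps power2_eq_square)
  qed
qed

end

context cls begin
definition "Am m x = (1 / real m) *\<^sub>R S m x"
lemma Am_meas[measurable]: "Am m \<in> borel_measurable (PP m)" unfolding Am_def by measurable

lemma Am_facts:
  assumes m: "m > 0"
  shows   "integrable (PP m) (\<lambda>x. (norm (Am m x))^4)" "integrable (PP m) (\<lambda>x. (norm (Am m x))^2)"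
  "integrable (PP m) (Am m)" "integral\<^sup>L (PP m) (Am m) = 0"
  "(\<integral>x. (norm (Am m x))^2 \<partial>PP m) = vv / m"
  "(\<integral>x. (norm (Am m x))^4 \<partial>PP m) \<le> (MM + 3 * (real m - 1) * vv^2) / real m ^ 3"
proof -
  have F: "integrable (PP m) (\<lambda>x. (norm (S m x))^4)" "integral\<^sup>L (PP m) (S m) = 0"
    "(\<integral>x. (norm (S m x))^2 \<partial>PP m) = m * vv"
    "(\<integral>x. (norm (S m x))^4 \<partial>PP m) \<le> real m * MM + 3 * real m * (real m - 1) * vv^2"
    using S_facts[of m] by auto
  interpret PPm: prob_space "PP m" by (rule prob_PP)
  have n4: "(norm (Am m x))^4 = (norm (S m x))^4 / real m ^ 4" for x
    unfolding Am_def using m by (simp add: power_divide)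
  have n2: "(norm (Am m x))^2 = (norm (S m x))^2 / real m ^ 2" for x
    unfolding Am_def using m by (simp add: power_divide)
  show i4: "integrable (PP m) (\<lambda>x. (norm (Am m x))^4)" unfolding n4 using F by simp
  show i2: "integrable (PP m) (\<lambda>x. (norm (Am m x))^2)"
    by (rule Bochner_Integration.integrable_bound[of _ "\<lambda>x. 1 + (norm (Am m x))^4"])
       (use i4 in \<open>auto intro!: AE_I2 pow_le_1_4\<close>)
  show "integrable (PP m) (Am m)"
    by (rule Bochner_Integration.integrable_bound[of _ "\<lambda>x. 1 + (norm (Am m x))^4"])
       (use i4 in \<open>auto intro!: AE_I2 pow_le_1_4[where n=1, simplified]\<close>)
  show "integral\<^sup>L (PP m) (Am m) = 0" unfolding Am_def using F by simp
  show "(\<integral>x. (norm (Am m x))^2 \<partial>PP m) = vv / m" unfolding n2 using F m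
    by (simp add: power2_eq_square)
  have "(\<integral>x. (norm (Am m x))^4 \<partial>PP m) = (\<integral>x. (norm (S m x))^4 \<partial>PP m) / real m ^ 4"
    unfolding n4 by simp
  also have "\<dots> \<le> (real m * MM + 3 * real m * (real m - 1) * vv^2) / real m ^ 4"
    using F m by (intro divide_right_mono) auto
  also have "\<dots> = (MM + 3 * (real m - 1) * vv^2) / real m ^ 3"
    using m by (simp add: field_simps power4_eq_xxxx power3_eq_cube)
  finally show "(\<integral>x. (norm (Am m x))^4 \<partial>PP m) \<le> (MM + 3 * (real m - 1) * vv^2) / real m ^ 3" .
qed

definition "Pm m x = (norm (Am m x))^2 - vv / real m"
lemma Pm_meas[measurable]: "Pm m \<in> borel_measurable (PP m)" unfolding Pm_def by measurable

lemma Pm_facts: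
  assumes m: "m > 0"
  shows "integrable (PP m) (Pm m)" "integral\<^sup>L (PP m) (Pm m) = 0"
    "integrable (PP m) (\<lambda>x. (Pm m x)^2)"
    "(\<integral>x. (Pm m x)^2 \<partial>PP m) \<le> (MM + (2 * real m - 3) * vv^2) / real m ^ 3"
proof -
  interpret PPm: prob_space "PP m" by (rule prob_PP)
  note F = Am_facts[OF m]
  show i1: "integrable (PP m) (Pm m)" unfolding Pm_def using F by simp
  show "integral\<^sup>L (PP m) (Pm m) = 0" unfolding Pm_def using F by (simp add: PPm.prob_space)
  have e: "(Pm m x)^2 = (norm (Am m x))^4 - 2 * (vv / m) * (norm (Am m x))^2 + (vv/m)^2" for x
    unfolding Pm_def by (simp add: power2_eq_square power4_eq_xxxx algebra_simps)
  show "integrable (PP m) (\<lambda>x. (Pm m x)^2)" unfolding e using F by simp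
  have "(\<integral>x. (Pm m x)^2 \<partial>PP m) = (\<integral>x. (norm (Am m x))^4 \<partial>PP m) - 2 * (vv / m) * (vv / m) + (vv/m)^2"
    unfolding e using F by (simp add: PPm.prob_space)
  also have "\<dots> \<le> (MM + 3 * (real m - 1) * vv^2) / real m ^ 3 - (vv/m)^2"
    using F by (simp add: power2_eq_square)
  also have "\<dots> = (MM + (2 * real m - 3) * vv^2) / real m ^ 3"
    using m by (simp add: field_simps power2_eq_square power3_eq_cube)
  finally show "(\<integral>x. (Pm m x)^2 \<partial>PP m) \<le> (MM + (2 * real m - 3) * vv^2) / real m ^ 3" .
qed

end

locale two = a: cls Pa ga + b: cls Pb gb
  for Pa :: "'a measure" and ga :: "'a \<Rightarrow> 'v::euclidean_space" and Pb :: "'a measure" and gb :: "'a \<Rightarrow> 'v" +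
  fixes m :: nat and \<delta> :: 'v
  assumes m_pos: "m > 0"
begin

definition "Y = a.PP m \<Otimes>\<^sub>M b.PP m"
abbreviation "A \<equiv> a.Am m"
abbreviation "B \<equiv> b.Am m"

lemma pa: "prob_space (a.PP m)" by (rule a.prob_PP)
lemma pb: "prob_space (b.PP m)" by (rule b.prob_PP)
lemma pY: "prob_space Y" unfolding Y_def
  by (intro prob_space_pair pa pb)


lemmas A_facts = a.Am_facts[OF m_pos]
lemmas B_facts = b.Am_facts[OF m_pos]

definition "Kf x = 2 * (\<delta> \<bullet> B (snd x)) + b.Pm m (snd x) - a.Pm m (fst x)"
definition "ef x = B (snd x) - A (fst x)"

lemma Kf_meas[measurable]: "Kf \<in> borel_measurable Y" unfolding Kf_def Y_def by measurable
lemma ef_meas[measurable]: "ef \<in> borel_measurable Y" unfolding ef_def Y_def by measurable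

lemma ef_facts:
  "integrable Y ef" "integral\<^sup>L Y ef = 0" "integrable Y (\<lambda>x. (norm (ef x))^2)"
  "(\<integral>x. (norm (ef x))^2 \<partial>Y) = (a.vv + b.vv) / m"
proof -
  note FA = A_facts and FB = B_facts
  have iA: "integrable Y (\<lambda>x. A (fst x))" "integral\<^sup>L Y (\<lambda>x. A (fst x)) = 0"
    unfolding Y_def using lift_fst[OF pa pb FA(3)] FA(4) by auto
  have iB: "integrable Y (\<lambda>x. B (snd x))" "integral\<^sup>L Y (\<lambda>x. B (snd x)) = 0"
    unfolding Y_def using lift_snd[OF pa pb FB(3)] FB(4) by auto
  have iA2: "integrable Y (\<lambda>x. (norm (A (fst x)))^2)" "(\<integral>x. (norm (A (fst x)))^2 \<partial>Y) = a.vv / m"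
    unfolding Y_def using lift_fst[OF pa pb FA(2)] FA(5) by auto
  have iB2: "integrable Y (\<lambda>x. (norm (B (snd x)))^2)" "(\<integral>x. (norm (B (snd x)))^2 \<partial>Y) = b.vv / m"
    unfolding Y_def using lift_snd[OF pa pb FB(2)] FB(5) by auto
  have iAB: "integrable Y (\<lambda>x. A (fst x) \<bullet> B (snd x))" "(\<integral>x. A (fst x) \<bullet> B (snd x) \<partial>Y) = 0"
    unfolding Y_def using prod_inner[OF pa pb FA(3) FB(3)] FA(4) by auto
  show "integrable Y ef" unfolding ef_def using iA iB by simp
  show "integral\<^sup>L Y ef = 0" unfolding ef_def using iA iB by simp
  have e: "(norm (ef x))^2 = (norm (B (snd x)))^2 - 2 * (A (fst x) \<bullet> B (snd x)) + (norm (A (fst x)))^2" for x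
    unfolding ef_def by (simp add: power2_norm_eq_inner inner_diff inner_commute algebra_simps)
  show "integrable Y (\<lambda>x. (norm (ef x))^2)" unfolding e using iA2 iB2 iAB by simp
  show "(\<integral>x. (norm (ef x))^2 \<partial>Y) = (a.vv + b.vv) / m" unfolding e using iA2 iB2 iAB
    by (simp add: add_divide_distrib)
qed

lemma Kf_facts:
  "integrable Y (\<lambda>x. (Kf x)^2)"
  "(\<integral>x. (Kf x)^2 \<partial>Y) \<le> (sqrt (4 * (norm \<delta>)^2 * b.vv / m)
      + sqrt ((a.MM + b.MM + (2 * real m - 3) * (a.vv^2 + b.vv^2)) / real m ^ 3))^2"
proof -
  interpret Y: prob_space Y by (rule pY)
  note FA = A_facts and FB = B_facts
  note PA = a.Pm_facts[OF m_pos] and PB = b.Pm_facts[OF m_pos]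
  define U where "U x = 2 * (\<delta> \<bullet> B (snd x))" for x :: "(nat \<Rightarrow> 'a) \<times> (nat \<Rightarrow> 'a)"
  define V where "V x = b.Pm m (snd x) - a.Pm m (fst x)" for x
  have [measurable]: "U \<in> borel_measurable Y" "V \<in> borel_measurable Y"
    unfolding U_def V_def Y_def by measurable
  have KUV: "Kf x = U x + V x" for x unfolding Kf_def U_def V_def by simp
  have iB2: "integrable Y (\<lambda>x. (norm (B (snd x)))^2)" "(\<integral>x. (norm (B (snd x)))^2 \<partial>Y) = b.vv / m"
    unfolding Y_def using lift_snd[OF pa pb FB(2)] FB(5) by auto
  have Ule: "(U x)^2 \<le> 4 * (norm \<delta>)^2 * (norm (B (snd x)))^2" for x
  proof -
    have "\<bar>\<delta> \<bullet> B (snd x)\<bar> \<le> norm \<delta> * norm (B (snd x))" by (rule Cauchy_Schwarz_ineq2)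
    hence "\<bar>\<delta> \<bullet> B (snd x)\<bar>^2 \<le> (norm \<delta> * norm (B (snd x)))^2" by (intro power_mono) auto
    thus ?thesis unfolding U_def by (simp add: power_mult_distrib)
  qed
  have iU: "integrable Y (\<lambda>x. (U x)^2)"
    by (rule Bochner_Integration.integrable_bound[of _ "\<lambda>x. 4 * (norm \<delta>)^2 * (norm (B (snd x)))^2"])
       (use iB2 Ule in \<open>auto intro!: AE_I2\<close>)
  have IU: "(\<integral>x. (U x)^2 \<partial>Y) \<le> 4 * (norm \<delta>)^2 * b.vv / m"
  proof -
    have "(\<integral>x. (U x)^2 \<partial>Y) \<le> (\<integral>x. 4 * (norm \<delta>)^2 * (norm (B (snd x)))^2 \<partial>Y)"
      by (rule integral_mono) (use iU iB2 Ule in auto)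
    thus ?thesis using iB2 by simp
  qed
  have lA: "integrable Y (\<lambda>x. a.Pm m (fst x))" "integrable Y (\<lambda>x. (a.Pm m (fst x))^2)"
    "(\<integral>x. (a.Pm m (fst x))^2 \<partial>Y) = (\<integral>x. (a.Pm m x)^2 \<partial>a.PP m)"
    unfolding Y_def using lift_fst[OF pa pb PA(1)] lift_fst[OF pa pb PA(3)] by auto
  have lB: "integrable Y (\<lambda>x. b.Pm m (snd x))" "integrable Y (\<lambda>x. (b.Pm m (snd x))^2)"
    "(\<integral>x. (b.Pm m (snd x))^2 \<partial>Y) = (\<integral>x. (b.Pm m x)^2 \<partial>b.PP m)"
    unfolding Y_def using lift_snd[OF pa pb PB(1)] lift_snd[OF pa pb PB(3)] by auto
  have lAB: "integrable Y (\<lambda>x. a.Pm m (fst x) * b.Pm m (snd x))"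
    "(\<integral>x. a.Pm m (fst x) * b.Pm m (snd x) \<partial>Y) = 0"
    unfolding Y_def using prod_real[OF pa pb PA(1) PB(1)] PA(2) by auto
  have eV: "(V x)^2 = (b.Pm m (snd x))^2 + (a.Pm m (fst x))^2 - 2 * (a.Pm m (fst x) * b.Pm m (snd x))" for x
    unfolding V_def by (simp add: power2_eq_square algebra_simps)
  have iV: "integrable Y (\<lambda>x. (V x)^2)" unfolding eV using lA lB lAB by simp
  have IV: "(\<integral>x. (V x)^2 \<partial>Y) \<le> (a.MM + b.MM + (2 * real m - 3) * (a.vv^2 + b.vv^2)) / real m ^ 3"
  proof -
    have "(\<integral>x. (V x)^2 \<partial>Y) = (\<integral>x. (b.Pm m x)^2 \<partial>b.PP m) + (\<integral>x. (a.Pm m x)^2 \<partial>a.PP m)"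
      unfolding eV using lA lB lAB by simp
    also have "\<dots> \<le> (b.MM + (2 * real m - 3) * b.vv^2) / real m ^ 3 + (a.MM + (2 * real m - 3) * a.vv^2) / real m ^ 3"
      using PA(4) PB(4) by (rule add_mono[rotated])
    also have "\<dots> = (a.MM + b.MM + (2 * real m - 3) * (a.vv^2 + b.vv^2)) / real m ^ 3"
      by (simp add: add_divide_distrib[symmetric] algebra_simps)
    finally show ?thesis .
  qed
  have "integrable Y (\<lambda>x. (U x + V x)^2)"
  proof -
    have "integrable Y (\<lambda>x. U x * V x)" by (rule Y.L2_mult_integrable) (use iU iV in auto)
    moreover have "(U x + V x)^2 = (U x)^2 + 2 * (U x * V x) + (V x)^2" for x
      by (simp add: power2_eq_square algebra_simps)
    ultimately show ?thesis using iU iV by simp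
  qed
  thus "integrable Y (\<lambda>x. (Kf x)^2)" unfolding KUV .
  have "(\<integral>x. (Kf x)^2 \<partial>Y) \<le> (sqrt (\<integral>x. (U x)^2 \<partial>Y) + sqrt (\<integral>x. (V x)^2 \<partial>Y))^2"
    unfolding KUV by (rule Y.minkowski2) (use iU iV in auto)
  also have "\<dots> \<le> (sqrt (4 * (norm \<delta>)^2 * b.vv / m)
      + sqrt ((a.MM + b.MM + (2 * real m - 3) * (a.vv^2 + b.vv^2)) / real m ^ 3))^2"
    by (intro power_mono add_mono real_sqrt_le_mono IU IV) auto
  finally show "(\<integral>x. (Kf x)^2 \<partial>Y) \<le> (sqrt (4 * (norm \<delta>)^2 * b.vv / m)
      + sqrt ((a.MM + b.MM + (2 * real m - 3) * (a.vv^2 + b.vv^2)) / real m ^ 3))^2" .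
qed

definition "N = Y \<Otimes>\<^sub>M Pa"
definition "Qf u = (\<integral>z. (u \<bullet> ga z)^2 \<partial>Pa)"
definition "Lv = (\<integral>z. (\<delta> \<bullet> ga z) *\<^sub>R ga z \<partial>Pa)"
definition "wv x = \<delta> + ef x"
definition "Wf y = Kf (fst y) - 2 * (ga (snd y) \<bullet> wv (fst y))"

lemma pP: "prob_space Pa" by (rule a.prob_space_axioms)
lemma pN: "prob_space N" unfolding N_def by (intro prob_space_pair pY pP)

lemma wv_meas[measurable]: "wv \<in> borel_measurable Y" unfolding wv_def by measurable
lemma Wf_meas[measurable]: "Wf \<in> borel_measurable N" unfolding Wf_def N_def by measurable

lemma sq_inner_le: "(u \<bullet> w)^2 \<le> (norm u)^2 * (norm (w::'v))^2"
proof -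
  have "\<bar>u \<bullet> w\<bar> \<le> norm u * norm w" by (rule Cauchy_Schwarz_ineq2)
  hence "\<bar>u \<bullet> w\<bar>^2 \<le> (norm u * norm w)^2" by (intro power_mono) auto
  thus ?thesis by (simp add: power_mult_distrib)
qed

lemma sq_int: "integrable Pa (\<lambda>z. (u \<bullet> ga z)^2)"
  by (rule Bochner_Integration.integrable_bound[of _ "\<lambda>z. (norm u)^2 * (norm (ga z))^2"])
     (use a.g2 sq_inner_le in \<open>auto intro!: AE_I2\<close>)

lemma sq_int_le: "Qf u \<le> (norm u)^2 * a.vv"
proof -
  have "Qf u \<le> (\<integral>z. (norm u)^2 * (norm (ga z))^2 \<partial>Pa)"
    unfolding Qf_def by (rule integral_mono) (use a.g2 sq_int sq_inner_le in auto)
  thus ?thesis unfolding a.vv_def by simp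
qed

lemma Qf_nonneg: "Qf u \<ge> 0" unfolding Qf_def by (rule integral_nonneg_AE) auto

lemma Lv_int: "integrable Pa (\<lambda>z. (\<delta> \<bullet> ga z) *\<^sub>R ga z)"
proof (rule Bochner_Integration.integrable_bound[of _ "\<lambda>z. norm \<delta> * (norm (ga z))^2"])
  show "AE z in Pa. norm ((\<delta> \<bullet> ga z) *\<^sub>R ga z) \<le> norm (norm \<delta> * (norm (ga z))^2)"
  proof (rule AE_I2)
    fix z
    have "norm ((\<delta> \<bullet> ga z) *\<^sub>R ga z) = \<bar>\<delta> \<bullet> ga z\<bar> * norm (ga z)" by simp
    also have "\<dots> \<le> (norm \<delta> * norm (ga z)) * norm (ga z)"
      by (intro mult_right_mono Cauchy_Schwarz_ineq2) auto
    finally show "norm ((\<delta> \<bullet> ga z) *\<^sub>R ga z) \<le> norm (norm \<delta> * (norm (ga z))^2)"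
      by (simp add: power2_eq_square mult.assoc)
  qed
qed (use a.g2 in auto)

lemma Qf_shift: "Qf (\<delta> + e) \<le> Qf \<delta> + 2 * (e \<bullet> Lv) + (norm e)^2 * a.vv"
proof -
  have eq: "((\<delta> + e) \<bullet> ga z)^2 = (\<delta> \<bullet> ga z)^2 + 2 * (e \<bullet> ((\<delta> \<bullet> ga z) *\<^sub>R ga z)) + (e \<bullet> ga z)^2" for z
    by (simp add: inner_add_left power2_eq_square algebra_simps)
  have i2: "integrable Pa (\<lambda>z. 2 * (e \<bullet> ((\<delta> \<bullet> ga z) *\<^sub>R ga z)))"
    by (intro integrable_mult_right integrable_inner_right Lv_int)
  have I2: "(\<integral>z. 2 * (e \<bullet> ((\<delta> \<bullet> ga z) *\<^sub>R ga z)) \<partial>Pa) = 2 * (e \<bullet> Lv)"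
    unfolding Lv_def using Lv_int by (simp del: inner_scaleR_right)
  have "Qf (\<delta> + e) = (\<integral>z. (\<delta> \<bullet> ga z)^2 + 2 * (e \<bullet> ((\<delta> \<bullet> ga z) *\<^sub>R ga z)) + (e \<bullet> ga z)^2 \<partial>Pa)"
    unfolding Qf_def eq ..
  also have "\<dots> = (\<integral>z. (\<delta> \<bullet> ga z)^2 + 2 * (e \<bullet> ((\<delta> \<bullet> ga z) *\<^sub>R ga z)) \<partial>Pa) + Qf e"
    unfolding Qf_def by (rule Bochner_Integration.integral_add[OF Bochner_Integration.integrable_add[OF sq_int i2] sq_int])
  also have "(\<integral>z. (\<delta> \<bullet> ga z)^2 + 2 * (e \<bullet> ((\<delta> \<bullet> ga z) *\<^sub>R ga z)) \<partial>Pa) = Qf \<delta> + 2 * (e \<bullet> Lv)"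
    unfolding Qf_def I2[symmetric] by (rule Bochner_Integration.integral_add[OF sq_int i2])
  finally have "Qf (\<delta> + e) = Qf \<delta> + 2 * (e \<bullet> Lv) + Qf e" .
  thus ?thesis using sq_int_le[of e] by simp
qed

lemma wv2_int: "integrable Y (\<lambda>x. (norm (wv x))^2)"
proof -
  have e: "(norm (wv x))^2 = (norm \<delta>)^2 + 2 * (\<delta> \<bullet> ef x) + (norm (ef x))^2" for x
    unfolding wv_def by (rule norm_add_sq)
  interpret Y: prob_space Y by (rule pY)
  show ?thesis unfolding e using ef_facts by simp
qed

lemma Wf2_int: "integrable N (\<lambda>y. (Wf y)^2)"
proof -
  have i1: "integrable N (\<lambda>y. (Kf (fst y))^2)" unfolding N_def by (rule lift_fst[OF pY pP Kf_facts(1)])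
  have i2: "integrable N (\<lambda>y. (norm (wv (fst y)))^2 * (norm (ga (snd y)))^2)"
    unfolding N_def by (rule prod_real[OF pY pP wv2_int a.g2])
  show ?thesis
  proof (rule Bochner_Integration.integrable_bound[of _ "\<lambda>y. 2 * (Kf (fst y))^2 + 8 * ((norm (wv (fst y)))^2 * (norm (ga (snd y)))^2)"])
    show "AE y in N. norm ((Wf y)^2) \<le> norm (2 * (Kf (fst y))^2 + 8 * ((norm (wv (fst y)))^2 * (norm (ga (snd y)))^2))"
    proof (rule AE_I2)
      fix y
      have a: "(p - 2 * q)^2 \<le> 2 * p^2 + 8 * q^2" for p q :: real
      proof -
        have "0 \<le> (p + 2 * q)^2" by simp
        thus ?thesis by (simp add: power2_eq_square algebra_simps)
      qed
      have "(Wf y)^2 \<le> 2 * (Kf (fst y))^2 + 8 * (ga (snd y) \<bullet> wv (fst y))^2"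
        unfolding Wf_def by (rule a)
      also have "\<dots> \<le> 2 * (Kf (fst y))^2 + 8 * ((norm (wv (fst y)))^2 * (norm (ga (snd y)))^2)"
        using sq_inner_le[of "ga (snd y)" "wv (fst y)"] by (simp add: mult.commute)
      finally show "norm ((Wf y)^2) \<le> norm (2 * (Kf (fst y))^2 + 8 * ((norm (wv (fst y)))^2 * (norm (ga (snd y)))^2))"
        by simp
    qed
  qed (use i1 i2 in auto)
qed

lemma inner_W: "(\<integral>z. (Wf (x, z))^2 \<partial>Pa) = (Kf x)^2 + 4 * Qf (wv x)"
proof -
  have e: "(Wf (x, z))^2 = (Kf x)^2 - 4 * Kf x * (ga z \<bullet> wv x) + 4 * (wv x \<bullet> ga z)^2" for z
    unfolding Wf_def by (simp add: power2_eq_square algebra_simps inner_commute)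
  have "(\<integral>z. ga z \<bullet> wv x \<partial>Pa) = 0" using a.g1 a.g0 by simp
  thus ?thesis unfolding e Qf_def using a.g1 sq_int by (simp add: a.prob_space)
qed

lemma W2_bound:
  "(\<integral>y. (Wf y)^2 \<partial>N) \<le> (\<integral>x. (Kf x)^2 \<partial>Y) + 4 * Qf \<delta> + 4 * a.vv * (a.vv + b.vv) / m"
proof -
  interpret Y: prob_space Y by (rule pY)
  interpret PY: pair_sigma_finite Y Pa by (intro pair_sigma_finite.intro Y.sigma_finite_measure_axioms a.sigma_finite_measure_axioms)
  have iW: "integrable (Y \<Otimes>\<^sub>M Pa) (\<lambda>y. (Wf y)^2)" using Wf2_int unfolding N_def .
  have "(\<integral>y. (Wf y)^2 \<partial>N) = (\<integral>x. (\<integral>z. (Wf (x, z))^2 \<partial>Pa) \<partial>Y)"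
    unfolding N_def using PY.integral_fst'[OF iW] by simp
  also have "\<dots> = (\<integral>x. (Kf x)^2 + 4 * Qf (wv x) \<partial>Y)" by (simp add: inner_W)
  finally have eq: "(\<integral>y. (Wf y)^2 \<partial>N) = (\<integral>x. (Kf x)^2 + 4 * Qf (wv x) \<partial>Y)" .
  have i1: "integrable Y (\<lambda>x. (Kf x)^2 + 4 * Qf (wv x))"
    using PY.integrable_fst'[OF iW] by (simp add: inner_W)
  have i2: "integrable Y (\<lambda>x. (Kf x)^2 + 4 * (Qf \<delta> + 2 * (ef x \<bullet> Lv) + (norm (ef x))^2 * a.vv))"
    using Kf_facts(1) ef_facts by simp
  have "(\<integral>x. (Kf x)^2 + 4 * Qf (wv x) \<partial>Y) \<le> (\<integral>x. (Kf x)^2 + 4 * (Qf \<delta> + 2 * (ef x \<bullet> Lv) + (norm (ef x))^2 * a.vv) \<partial>Y)"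
    apply (rule integral_mono[OF i1 i2])
    subgoal for x using Qf_shift[of "ef x"] unfolding wv_def by simp
    done
  also have "\<dots> = (\<integral>x. (Kf x)^2 \<partial>Y) + 4 * Qf \<delta> + 4 * a.vv * (a.vv + b.vv) / m"
    using Kf_facts(1) ef_facts by (simp add: Y.prob_space algebra_simps)
  finally show ?thesis using eq by simp
qed

lemma sqrt_comb:
  fixes \<alpha> \<beta> \<gamma> :: real
  assumes "\<alpha> \<ge> 0" "\<beta> \<ge> 0" "\<gamma> \<ge> 0"
  shows "(sqrt \<beta> + sqrt \<alpha>)^2 + \<gamma> \<le> (sqrt (\<beta> + \<gamma>) + sqrt \<alpha>)^2"
proof -
  have "sqrt \<beta> \<le> sqrt (\<beta> + \<gamma>)" using assms by simp
  hence "sqrt \<beta> * sqrt \<alpha> \<le> sqrt (\<beta> + \<gamma>) * sqrt \<alpha>" using assms by (intro mult_right_mono) auto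
  thus ?thesis using assms by (simp add: power2_eq_square algebra_simps)
qed

lemma level2:
  assumes c_def: "c = (norm \<delta>)^2 + (b.vv - a.vv) / m" and cpos: "c > 0" and m2: "m \<ge> 2"
  shows "measure N {y \<in> space N. (norm (ga (snd y) - \<delta> - B (snd (fst y))))^2 - (norm (ga (snd y) - A (fst (fst y))))^2 \<le> 0}
   \<le> (4 * Qf \<delta> + (sqrt (4 * (norm \<delta>)^2 * b.vv / m + 4 * a.vv * (a.vv + b.vv) / m)
        + sqrt ((a.MM + b.MM + (2 * real m - 3) * (a.vv^2 + b.vv^2)) / real m ^ 3))^2) / c^2"
proof -
  interpret N: prob_space N by (rule pN)
  have id: "(norm (ga (snd y) - \<delta> - B (snd (fst y))))^2 - (norm (ga (snd y) - A (fst (fst y))))^2 - c = Wf y" for y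
    unfolding Wf_def Kf_def wv_def ef_def a.Pm_def b.Pm_def c_def
    by (simp add: power2_norm_eq_inner inner_diff_left inner_diff_right inner_add_left inner_add_right inner_commute algebra_simps diff_divide_distrib)
  have sub: "{y \<in> space N. (norm (ga (snd y) - \<delta> - B (snd (fst y))))^2 - (norm (ga (snd y) - A (fst (fst y))))^2 \<le> 0}
      \<subseteq> {y \<in> space N. \<bar>Wf y\<bar> \<ge> c}"
  proof safe
    fix y assume "y \<in> space N" "(norm (ga (snd y) - \<delta> - B (snd (fst y))))^2 - (norm (ga (snd y) - A (fst (fst y))))^2 \<le> 0"
    thus "\<bar>Wf y\<bar> \<ge> c" using id[of y] cpos by linarith
  qed
  have "measure N {y \<in> space N. (norm (ga (snd y) - \<delta> - B (snd (fst y))))^2 - (norm (ga (snd y) - A (fst (fst y))))^2 \<le> 0}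
      \<le> measure N {y \<in> space N. \<bar>Wf y\<bar> \<ge> c}"
    by (rule N.finite_measure_mono[OF sub]) measurable
  also have "\<dots> \<le> (\<integral>y. (Wf y)^2 \<partial>N) / c^2"
    by (rule N.second_moment_method) (use Wf2_int cpos in auto)
  also have "\<dots> \<le> (4 * Qf \<delta> + (sqrt (4 * (norm \<delta>)^2 * b.vv / m + 4 * a.vv * (a.vv + b.vv) / m)
        + sqrt ((a.MM + b.MM + (2 * real m - 3) * (a.vv^2 + b.vv^2)) / real m ^ 3))^2) / c^2"
  proof (rule divide_right_mono)
    have ge: "(2 * real m - 3) \<ge> 0" using m2 by simp
    have "(\<integral>y. (Wf y)^2 \<partial>N) \<le> (\<integral>x. (Kf x)^2 \<partial>Y) + 4 * Qf \<delta> + 4 * a.vv * (a.vv + b.vv) / m"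
      by (rule W2_bound)
    also have "\<dots> \<le> (sqrt (4 * (norm \<delta>)^2 * b.vv / m)
      + sqrt ((a.MM + b.MM + (2 * real m - 3) * (a.vv^2 + b.vv^2)) / real m ^ 3))^2 + 4 * a.vv * (a.vv + b.vv) / m + 4 * Qf \<delta>"
      using Kf_facts(2) by simp
    also have "\<dots> \<le> (sqrt (4 * (norm \<delta>)^2 * b.vv / m + 4 * a.vv * (a.vv + b.vv) / m)
        + sqrt ((a.MM + b.MM + (2 * real m - 3) * (a.vv^2 + b.vv^2)) / real m ^ 3))^2 + 4 * Qf \<delta>"
      using ge a.vv_nonneg b.vv_nonneg a.MM_nonneg b.MM_nonneg
      by (intro add_right_mono sqrt_comb) auto
    finally show "(\<integral>y. (Wf y)^2 \<partial>N) \<le> 4 * Qf \<delta> + (sqrt (4 * (norm \<delta>)^2 * b.vv / m + 4 * a.vv * (a.vv + b.vv) / m)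
        + sqrt ((a.MM + b.MM + (2 * real m - 3) * (a.vv^2 + b.vv^2)) / real m ^ 3))^2" by simp
  qed simp
  finally show ?thesis .
qed

end

lemma final_arith:
  fixes d vi vj Mi Mj q m c V Th :: real
  assumes d: "d > 0" and vi: "vi \<ge> 0" and vj: "vj \<ge> 0" and Mi: "Mi \<ge> 0" and Mj: "Mj \<ge> 0"
    and m: "m \<ge> 2" and c: "c = d^2 + (vj - vi) / m" and cpos: "c > 0" and q: "q \<ge> 0"
    and V: "V = (vi + vj) / d^2" and Th: "Th = (Mi + Mj) / d^4"
  shows "(4 * (d^2 * q) + (sqrt (4 * d^2 * vj / m + 4 * vi * (vi + vj) / m)
          + sqrt ((Mi + Mj + (2 * m - 3) * (vi^2 + vj^2)) / m ^ 3))^2) / c^2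
   \<le> 4 * (q / d^2) / (1 + (vj - vi) / (m * d^2))^2
     + (sqrt (4 / m * (V^2 + V / 4)) + sqrt (V / m) + sqrt ((Th + 2 * (m - 1) * V^2) / m ^ 3))^2
       / (1 + (vj - vi) / (m * d^2))^2"
proof -
  define r where "r = 1 + (vj - vi) / (m * d^2)"
  have cr: "c = d^2 * r" unfolding c r_def using d m by (simp add: field_simps)
  have rpos: "r > 0" using cr cpos d by (simp add: zero_less_mult_iff)
  define E1 where "E1 = 4 / m * (V^2 + V / 4)"
  define E2 where "E2 = V / m"
  define E3 where "E3 = (Th + 2 * (m - 1) * V^2) / m ^ 3"
  define X1 where "X1 = 4 * d^2 * vj / m + 4 * vi * (vi + vj) / m"
  define X2 where "X2 = (Mi + Mj + (2 * m - 3) * (vi^2 + vj^2)) / m ^ 3"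
  have V0: "V \<ge> 0" unfolding V using vi vj by simp
  have mpos: "m > 0" using m by simp
  have E10: "E1 \<ge> 0" "E2 \<ge> 0" unfolding E1_def E2_def using V0 mpos by auto
  have X10: "X1 \<ge> 0" unfolding X1_def using vi vj mpos by auto
  have X20: "X2 \<ge> 0" unfolding X2_def using vi vj mpos m Mi Mj by auto
  have d4: "d^4 = d^2 * d^2" by (simp add: power4_eq_xxxx power2_eq_square)
  have "X2 \<le> d^4 * E3"
  proof -
    have "(2 * m - 3) * (vi^2 + vj^2) \<le> 2 * (m - 1) * (vi + vj)^2"
    proof -
      have "0 \<le> (vi^2 + vj^2) + (4 * m - 4) * (vi * vj)" using vi vj m by simp
      thus ?thesis by (simp add: power2_eq_square algebra_simps)
    qed
    moreover have "d^4 * E3 = (Mi + Mj + 2 * (m - 1) * (vi + vj)^2) / m ^ 3"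
    proof -
      have t1: "d^4 * Th = Mi + Mj" unfolding Th using d by simp
      have t2: "d^4 * V^2 = (vi + vj)^2" unfolding V d4 using d by (simp add: power_divide power2_eq_square)
      have "d^4 * E3 = (d^4 * Th + 2 * (m - 1) * (d^4 * V^2)) / m ^ 3"
        unfolding E3_def by (simp add: algebra_simps)
      thus ?thesis using t1 t2 by simp
    qed
    ultimately show ?thesis unfolding X2_def using mpos by (simp add: divide_right_mono)
  qed
  hence s2: "sqrt X2 \<le> d^2 * sqrt E3"
    using d by (metis real_sqrt_le_mono real_sqrt_mult real_sqrt_pow2_iff zero_le_power2 power2_eq_square
                 d4 real_sqrt_abs abs_of_nonneg)
  have "X1 \<le> d^4 * (4 * V / m + 4 * V^2 / m)"
  proof -
    have t0: "d^2 * V = vi + vj" unfolding V using d by simp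
    have t1: "d^4 * V = d^2 * (vi + vj)" using t0 d4 by (metis mult.assoc)
    have t2: "d^4 * V^2 = (vi + vj)^2" unfolding V d4 using d by (simp add: power_divide power2_eq_square)
    have "d^4 * (4 * V / m + 4 * V^2 / m) = 4 * (d^4 * V) / m + 4 * (d^4 * V^2) / m"
      by (simp add: algebra_simps add_divide_distrib)
    hence "d^4 * (4 * V / m + 4 * V^2 / m) = 4 * d^2 * (vi + vj) / m + 4 * (vi + vj)^2 / m"
      using t1 t2 by simp
    moreover have "4 * d^2 * vj / m \<le> 4 * d^2 * (vi + vj) / m" using vi mpos
      by (intro divide_right_mono mult_left_mono) auto
    moreover have "4 * vi * (vi + vj) / m \<le> 4 * (vi + vj)^2 / m" using vi vj mpos
      by (intro divide_right_mono) (auto simp: power2_eq_square intro!: mult_right_mono)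
    ultimately show ?thesis unfolding X1_def by linarith
  qed
  also have "\<dots> \<le> d^4 * (sqrt E1 + sqrt E2)^2"
  proof -
    have a: "sqrt E2 \<le> sqrt E1" unfolding E1_def E2_def using V0 mpos
      by (intro real_sqrt_le_mono) (auto simp: field_simps)
    have "sqrt E2 * sqrt E2 \<le> sqrt E1 * sqrt E2" using a E10 by (intro mult_right_mono) auto
    hence b: "E2 \<le> sqrt E1 * sqrt E2" using E10 by simp
    have sq: "(sqrt E1 + sqrt E2)^2 = E1 + E2 + 2 * (sqrt E1 * sqrt E2)"
      using E10 by (simp add: power2_eq_square algebra_simps)
    have e1: "E1 = 4 * V^2 / m + V / m" unfolding E1_def using mpos by (simp add: field_simps)
    have "4 * V / m = V / m + 3 * E2" unfolding E2_def by simp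
    hence "4 * V / m + 4 * V^2 / m \<le> (sqrt E1 + sqrt E2)^2"
      unfolding sq using b e1 unfolding E2_def by linarith
    thus ?thesis using d by (intro mult_left_mono) auto
  qed
  finally have "sqrt X1 \<le> sqrt (d^4 * (sqrt E1 + sqrt E2)^2)" by (rule real_sqrt_le_mono)
  also have "\<dots> = d^2 * (sqrt E1 + sqrt E2)"
    using E10 d by (simp add: real_sqrt_mult d4 power2_eq_square)
  finally have s1: "sqrt X1 \<le> d^2 * (sqrt E1 + sqrt E2)" .
  have tot: "(sqrt X1 + sqrt X2)^2 \<le> (d^2 * (sqrt E1 + sqrt E2 + sqrt E3))^2"
    using s1 s2 X10 X20 by (intro power_mono) (auto simp: algebra_simps)
  have "(4 * (d^2 * q) + (sqrt X1 + sqrt X2)^2) / c^2 = 4 * (d^2 * q) / c^2 + (sqrt X1 + sqrt X2)^2 / c^2"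
    by (simp add: add_divide_distrib)
  also have "4 * (d^2 * q) / c^2 = 4 * (q / d^2) / r^2"
    unfolding cr using d rpos by (simp add: field_simps power2_eq_square)
  also have "(sqrt X1 + sqrt X2)^2 / c^2 \<le> (d^2 * (sqrt E1 + sqrt E2 + sqrt E3))^2 / c^2"
    using tot by (intro divide_right_mono) auto
  also have "(d^2 * (sqrt E1 + sqrt E2 + sqrt E3))^2 / c^2 = (sqrt E1 + sqrt E2 + sqrt E3)^2 / r^2"
    unfolding cr using d rpos by (simp add: field_simps power2_eq_square)
  finally show ?thesis unfolding X1_def X2_def E1_def E2_def E3_def r_def by simp
qed


lemma distr_two_components:
  assumes M: "\<And>k. k \<in> I \<Longrightarrow> prob_space (M k)" and ij: "i \<in> I" "j \<in> I" "i \<noteq> j"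
  shows "distr (PiM I M) (M i \<Otimes>\<^sub>M M j) (\<lambda>\<omega>. (\<omega> i, \<omega> j)) = M i \<Otimes>\<^sub>M M j"
proof (rule pair_measure_eqI[symmetric])
  interpret Mi: prob_space "M i" using M ij by auto
  interpret Mj: prob_space "M j" using M ij by auto
  show "sigma_finite_measure (M i)" "sigma_finite_measure (M j)"
    by (rule Mi.sigma_finite_measure_axioms Mj.sigma_finite_measure_axioms)+
  show "sets (M i \<Otimes>\<^sub>M M j) = sets (distr (PiM I M) (M i \<Otimes>\<^sub>M M j) (\<lambda>\<omega>. (\<omega> i, \<omega> j)))" by simp
  fix A B assume A: "A \<in> sets (M i)" and B: "B \<in> sets (M j)"
  define F where "F k = (if k = i then A else B)" for k
  have meas: "(\<lambda>\<omega>. (\<omega> i, \<omega> j)) \<in> measurable (PiM I M) (M i \<Otimes>\<^sub>M M j)"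
    using ij by measurable
  have "(\<lambda>\<omega>. (\<omega> i, \<omega> j)) -` (A \<times> B) \<inter> space (PiM I M) = prod_emb I M {i, j} (Pi\<^sub>E {i, j} F)"
    using ij by (auto simp: prod_emb_def space_PiM F_def PiE_iff)
  hence "emeasure (distr (PiM I M) (M i \<Otimes>\<^sub>M M j) (\<lambda>\<omega>. (\<omega> i, \<omega> j))) (A \<times> B)
      = emeasure (PiM I M) (prod_emb I M {i, j} (Pi\<^sub>E {i, j} F))"
    using A B meas by (simp add: emeasure_distr)
  also have "\<dots> = (\<Prod>k\<in>{i, j}. emeasure (M k) (F k))"
    using ij A B by (intro emeasure_PiM_emb M) (auto simp: F_def)
  also have "\<dots> = emeasure (M i) A * emeasure (M j) B" using ij by (simp add: F_def)
  finally show "emeasure (M i) A * emeasure (M j) B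
      = emeasure (distr (PiM I M) (M i \<Otimes>\<^sub>M M j) (\<lambda>\<omega>. (\<omega> i, \<omega> j))) (A \<times> B)" by simp
qed

lemma pair_bound:
  fixes C m :: nat and Mx :: "'x measure" and D :: "nat \<Rightarrow> 'x measure"
    and f :: "'x \<Rightarrow> real^'d" and i j :: nat
  assumes m10: "m \<ge> 10"
    and prob: "\<And>c. c < C \<Longrightarrow> prob_space (D c)"
    and sets_D: "\<And>c. c < C \<Longrightarrow> sets (D c) = sets Mx"
    and f_meas: "f \<in> borel_measurable Mx"
    and fourth: "\<And>c. c < C \<Longrightarrow> integrable (D c) (\<lambda>x. (norm (f x - cmean D f c))^4)"
    and ij: "i < C" "j < C" "i \<noteq> j"
    and sep: "cdist D f i j > 0"
    and gap: "(cdist D f i j)^2 + (cvar D f j - cvar D f i) / real m > 0"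
  shows "measure (ncc_space C m D i)
     {\<omega> \<in> space (ncc_space C m D i).
        (norm (f (snd \<omega>) - (1 / real m) *\<^sub>R (\<Sum>s<m. f (fst \<omega> j s))))^2
        \<le> (norm (f (snd \<omega>) - (1 / real m) *\<^sub>R (\<Sum>s<m. f (fst \<omega> i s))))^2}
   \<le> 4 * dir_cdnv D f i j /
          (1 + (cvar D f j - cvar D f i) / (real m * (cdist D f i j)^2))^2
     + (sqrt (4 / real m * ((cdnv D f i j)^2 + cdnv D f i j / 4))
         + sqrt (cdnv D f i j / real m)
         + sqrt ((ctheta D f i j + 2 * (real m - 1) * (cdnv D f i j)^2) / (real m)^3))^2 /
          (1 + (cvar D f j - cvar D f i) / (real m * (cdist D f i j)^2))^2"
proof -
  define g where "g c x = f x - cmean D f c" for c x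
  have fm: "f \<in> borel_measurable (D c)" if "c < C" for c
    by (subst measurable_cong_sets[OF sets_D[OF that] refl]) (rule f_meas)
  have cls: "cls (D c) (g c)" if c: "c < C" for c
  proof -
    interpret prob_space "D c" using prob c by simp
    have [measurable]: "f \<in> borel_measurable (D c)" using fm c by simp
    have gm: "g c \<in> borel_measurable (D c)" unfolding g_def by measurable
    have g4: "integrable (D c) (\<lambda>x. (norm (g c x))^4)" using fourth c unfolding g_def by simp
    have gi: "integrable (D c) (g c)"
      by (rule Bochner_Integration.integrable_bound[of _ "\<lambda>x. 1 + (norm (g c x))^4"])
         (use g4 gm in \<open>auto intro!: AE_I2 pow_le_1_4[where n=1, simplified]\<close>)
    have fi: "integrable (D c) f"
    proof -
      have "integrable (D c) (\<lambda>x. g c x + cmean D f c)" using gi by simp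
      thus ?thesis unfolding g_def by simp
    qed
    have "integral\<^sup>L (D c) (g c) = 0"
      unfolding g_def cmean_def using fi by (simp add: prob_space)
    thus ?thesis unfolding cls_def cls_axioms_def using gm g4 prob_space_axioms by auto
  qed
  define \<delta> where "\<delta> = cmean D f j - cmean D f i"
  interpret T: two "D i" "g i" "D j" "g j" m \<delta>
    unfolding two_def two_axioms_def using cls ij m10 by auto
  have vvi: "cls.vv (D i) (g i) = cvar D f i" by (simp add: T.a.vv_def cvar_def g_def)
  have vvj: "cls.vv (D j) (g j) = cvar D f j" by (simp add: T.b.vv_def cvar_def g_def)
  have MMi: "cls.MM (D i) (g i) = cM4 D f i" by (simp add: T.a.MM_def cM4_def g_def)
  have MMj: "cls.MM (D j) (g j) = cM4 D f j" by (simp add: T.b.MM_def cM4_def g_def)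
  have dd: "cdist D f i j = norm \<delta>" unfolding cdist_def \<delta>_def ..
  define c where "c = (norm \<delta>)^2 + (cls.vv (D j) (g j) - cls.vv (D i) (g i)) / real m"
  have cpos: "c > 0" using gap unfolding c_def vvi vvj dd .
  define Sset where "Sset = {y \<in> space T.N. (norm (g i (snd y) - \<delta> - cls.Am (g j) m (snd (fst y))))^2
      - (norm (g i (snd y) - cls.Am (g i) m (fst (fst y))))^2 \<le> 0}"
  have L2: "measure T.N Sset \<le> (4 * T.Qf \<delta> + (sqrt (4 * (norm \<delta>)^2 * cls.vv (D j) (g j) / m
        + 4 * cls.vv (D i) (g i) * (cls.vv (D i) (g i) + cls.vv (D j) (g j)) / m)
        + sqrt ((cls.MM (D i) (g i) + cls.MM (D j) (g j) + (2 * real m - 3) *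
          ((cls.vv (D i) (g i))^2 + (cls.vv (D j) (g j))^2)) / real m ^ 3))^2) / c^2"
    unfolding Sset_def by (rule T.level2[OF c_def cpos]) (use m10 in simp)
  have dpos: "norm \<delta> > 0" using sep dd by simp
  have Qd: "T.Qf \<delta> = (norm \<delta>)^2 * covq D f i (cdir D f i j)"
  proof -
    have e: "(\<delta> \<bullet> g i z)^2 = (norm \<delta>)^2 * (cdir D f i j \<bullet> (f z - cmean D f i))^2" for z
      unfolding cdir_def dd g_def \<delta>_def[symmetric] using dpos by (simp add: power_divide)
    show ?thesis unfolding T.Qf_def covq_def e by simp
  qed
  have q0: "covq D f i (cdir D f i j) \<ge> 0" unfolding covq_def by (rule integral_nonneg_AE) auto
  have fin: "(4 * T.Qf \<delta> + (sqrt (4 * (norm \<delta>)^2 * cls.vv (D j) (g j) / m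
        + 4 * cls.vv (D i) (g i) * (cls.vv (D i) (g i) + cls.vv (D j) (g j)) / m)
        + sqrt ((cls.MM (D i) (g i) + cls.MM (D j) (g j) + (2 * real m - 3) *
          ((cls.vv (D i) (g i))^2 + (cls.vv (D j) (g j))^2)) / real m ^ 3))^2) / c^2
     \<le> 4 * dir_cdnv D f i j /
          (1 + (cvar D f j - cvar D f i) / (real m * (cdist D f i j)^2))^2
     + (sqrt (4 / real m * ((cdnv D f i j)^2 + cdnv D f i j / 4))
         + sqrt (cdnv D f i j / real m)
         + sqrt ((ctheta D f i j + 2 * (real m - 1) * (cdnv D f i j)^2) / (real m)^3))^2 /
          (1 + (cvar D f j - cvar D f i) / (real m * (cdist D f i j)^2))^2"
    unfolding Qd vvi vvj MMi MMj dir_cdnv_def dd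
    apply (rule final_arith)
    using dpos T.a.vv_nonneg T.b.vv_nonneg T.a.MM_nonneg T.b.MM_nonneg m10 cpos q0
    by (auto simp: c_def vvi vvj MMi MMj cdnv_def ctheta_def dd)
  define Mc where "Mc c = PiM {..<m} (\<lambda>s. D c)" for c
  have pMc: "prob_space (Mc c)" if "c < C" for c
    unfolding Mc_def by (rule prob_space_PiM) (use prob that in auto)
  have Om: "ncc_space C m D i = PiM {..<C} Mc \<Otimes>\<^sub>M D i" unfolding ncc_space_def Mc_def ..
  have NN: "T.N = (Mc i \<Otimes>\<^sub>M Mc j) \<Otimes>\<^sub>M D i"
    unfolding T.N_def T.Y_def T.a.PP_def T.b.PP_def Mc_def ..
  define h :: "((nat \<Rightarrow> nat \<Rightarrow> 'x) \<times> 'x) \<Rightarrow> ((nat \<Rightarrow> 'x) \<times> (nat \<Rightarrow> 'x)) \<times> 'x"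
    where "h = (\<lambda>(x, y). ((x i, x j), y))"
  have m1: "(\<lambda>a. (a i, a j)) \<in> measurable (PiM {..<C} Mc) (Mc i \<Otimes>\<^sub>M Mc j)"
    using ij by (intro measurable_Pair measurable_component_singleton) auto
  have hm: "h \<in> measurable (PiM {..<C} Mc \<Otimes>\<^sub>M D i) ((Mc i \<Otimes>\<^sub>M Mc j) \<Otimes>\<^sub>M D i)"
    unfolding h_def using m1 by measurable
  have dist: "distr (PiM {..<C} Mc \<Otimes>\<^sub>M D i) ((Mc i \<Otimes>\<^sub>M Mc j) \<Otimes>\<^sub>M D i) h = (Mc i \<Otimes>\<^sub>M Mc j) \<Otimes>\<^sub>M D i"
  proof -
    have d1: "distr (PiM {..<C} Mc) (Mc i \<Otimes>\<^sub>M Mc j) (\<lambda>a. (a i, a j)) = Mc i \<Otimes>\<^sub>M Mc j"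
      by (rule distr_two_components) (use pMc ij in auto)
    have d2: "distr (D i) (D i) (\<lambda>x. x) = D i" by (rule distr_id)
    have "distr (PiM {..<C} Mc) (Mc i \<Otimes>\<^sub>M Mc j) (\<lambda>a. (a i, a j)) \<Otimes>\<^sub>M distr (D i) (D i) (\<lambda>x. x)
       = distr (PiM {..<C} Mc \<Otimes>\<^sub>M D i) ((Mc i \<Otimes>\<^sub>M Mc j) \<Otimes>\<^sub>M D i) (\<lambda>(x, y). ((x i, x j), y))"
      by (rule pair_measure_distr[OF m1]) (simp_all add: d2 T.a.sigma_finite_measure_axioms)
    thus ?thesis unfolding d1 d2 h_def by simp
  qed
  have Sm: "Sset \<in> sets T.N" unfolding Sset_def T.N_def T.Y_def by measurable
  have ami: "(1 / real m) *\<^sub>R (\<Sum>s<m. f (x s)) = cmean D f i + cls.Am (g i) m x" for x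
    unfolding T.a.Am_def T.a.S_def g_def using m10
    by (simp add: sum_subtractf scaleR_diff_right sum_constant_scaleR del: sum_constant)
  have amj: "(1 / real m) *\<^sub>R (\<Sum>s<m. f (x s)) = cmean D f j + cls.Am (g j) m x" for x
    unfolding T.b.Am_def T.b.S_def g_def using m10
    by (simp add: sum_subtractf scaleR_diff_right sum_constant_scaleR del: sum_constant)
  have key: "(norm (f z - (1 / real m) *\<^sub>R (\<Sum>s<m. f (x j s))))^2 \<le> (norm (f z - (1 / real m) *\<^sub>R (\<Sum>s<m. f (x i s))))^2
     \<longleftrightarrow> (norm (g i z - \<delta> - cls.Am (g j) m (x j)))^2 - (norm (g i z - cls.Am (g i) m (x i)))^2 \<le> 0" for x z
  proof -
    have 1: "f z - (1 / real m) *\<^sub>R (\<Sum>s<m. f (x j s)) = g i z - \<delta> - cls.Am (g j) m (x j)"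
      unfolding amj g_def \<delta>_def by (simp add: algebra_simps)
    have 2: "f z - (1 / real m) *\<^sub>R (\<Sum>s<m. f (x i s)) = g i z - cls.Am (g i) m (x i)"
      unfolding ami g_def by (simp add: algebra_simps)
    show ?thesis unfolding 1 2 by simp
  qed
  have seteq: "{\<omega> \<in> space (ncc_space C m D i).
        (norm (f (snd \<omega>) - (1 / real m) *\<^sub>R (\<Sum>s<m. f (fst \<omega> j s))))^2
        \<le> (norm (f (snd \<omega>) - (1 / real m) *\<^sub>R (\<Sum>s<m. f (fst \<omega> i s))))^2}
      = h -` Sset \<inter> space (PiM {..<C} Mc \<Otimes>\<^sub>M D i)"
  proof -
    have sp: "h \<omega> \<in> space T.N" if "\<omega> \<in> space (PiM {..<C} Mc \<Otimes>\<^sub>M D i)" for \<omega>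
      using measurable_space[OF hm that] NN by simp
    show ?thesis unfolding Om Sset_def using sp by (auto simp: key h_def split_beta)
  qed
  have "measure (ncc_space C m D i)
     {\<omega> \<in> space (ncc_space C m D i).
        (norm (f (snd \<omega>) - (1 / real m) *\<^sub>R (\<Sum>s<m. f (fst \<omega> j s))))^2
        \<le> (norm (f (snd \<omega>) - (1 / real m) *\<^sub>R (\<Sum>s<m. f (fst \<omega> i s))))^2}
     = measure T.N Sset"
  proof -
    have "measure T.N Sset = measure (distr (PiM {..<C} Mc \<Otimes>\<^sub>M D i) T.N h) Sset"
      using dist NN by simp
    also have "\<dots> = measure (PiM {..<C} Mc \<Otimes>\<^sub>M D i) (h -` Sset \<inter> space (PiM {..<C} Mc \<Otimes>\<^sub>M D i))"
      by (rule measure_distr) (use hm NN Sm in auto)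
    finally have "measure (ncc_space C m D i) (h -` Sset \<inter> space (PiM {..<C} Mc \<Otimes>\<^sub>M D i)) = measure T.N Sset"
      unfolding Om by simp
    thus ?thesis unfolding seteq .
  qed
  thus ?thesis using L2 fin by linarith
qed

theorem theorem1:
  fixes C m :: nat and Mx :: "'x measure" and D :: "nat \<Rightarrow> 'x measure"
    and f :: "'x \<Rightarrow> real^'d" and tb :: "nat set \<Rightarrow> nat"
  assumes C2: "C \<ge> 2" and m10: "m \<ge> 10"
    and prob: "\<And>c. c < C \<Longrightarrow> prob_space (D c)"
    and sets_D: "\<And>c. c < C \<Longrightarrow> sets (D c) = sets Mx"
    and f_meas: "f \<in> borel_measurable Mx"
    and fourth: "\<And>c. c < C \<Longrightarrow> integrable (D c) (\<lambda>x. (norm (f x - cmean D f c))^4)"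
    and sep: "\<And>i j. i < C \<Longrightarrow> j < C \<Longrightarrow> i \<noteq> j \<Longrightarrow> cdist D f i j > 0"
    and gap: "\<And>i j. i < C \<Longrightarrow> j < C \<Longrightarrow> i \<noteq> j \<Longrightarrow>
                 (cdist D f i j)^2 + (cvar D f j - cvar D f i) / real m > 0"
    and tb: "\<And>S. S \<noteq> {} \<Longrightarrow> S \<subseteq> {..<C} \<Longrightarrow> tb S \<in> S"
  shows "ncc_err C m D f tb \<le>
     (1 / real C) * (\<Sum>i<C. \<Sum>j\<in>{..<C} - {i}.
        4 * dir_cdnv D f i j /
          (1 + (cvar D f j - cvar D f i) / (real m * (cdist D f i j)^2))^2)
   + (1 / real C) * (\<Sum>i<C. \<Sum>j\<in>{..<C} - {i}.
        (sqrt (4 / real m * ((cdnv D f i j)^2 + cdnv D f i j / 4))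
         + sqrt (cdnv D f i j / real m)
         + sqrt ((ctheta D f i j + 2 * (real m - 1) * (cdnv D f i j)^2) / (real m)^3))^2 /
          (1 + (cvar D f j - cvar D f i) / (real m * (cdist D f i j)^2))^2)"
proof -
  have fm: "f \<in> borel_measurable (D c)" if "c < C" for c
    by (subst measurable_cong_sets[OF sets_D[OF that] refl]) (rule f_meas)
  define muh where "muh \<omega> c = (1 / real m) *\<^sub>R (\<Sum>s<m. f (fst \<omega> c s))"
    for \<omega> :: "(nat \<Rightarrow> nat \<Rightarrow> 'x) \<times> 'x" and c
  define T1 where "T1 i j = 4 * dir_cdnv D f i j /
          (1 + (cvar D f j - cvar D f i) / (real m * (cdist D f i j)^2))^2" for i j
  define T2 where "T2 i j = (sqrt (4 / real m * ((cdnv D f i j)^2 + cdnv D f i j / 4))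
         + sqrt (cdnv D f i j / real m)
         + sqrt ((ctheta D f i j + 2 * (real m - 1) * (cdnv D f i j)^2) / (real m)^3))^2 /
          (1 + (cvar D f j - cvar D f i) / (real m * (cdist D f i j)^2))^2" for i j
  have per_i: "measure (ncc_space C m D i)
        {\<omega> \<in> space (ncc_space C m D i). ncc_pred C tb (muh \<omega>) (f (snd \<omega>)) \<noteq> i}
      \<le> (\<Sum>j\<in>{..<C} - {i}. T1 i j + T2 i j)" if i: "i < C" for i
  proof -
    let ?O = "ncc_space C m D i"
    interpret O: prob_space ?O unfolding ncc_space_def
      by (intro prob_space_pair prob_space_PiM) (use prob i in auto)
    define E where "E j = {\<omega> \<in> space ?O. (norm (f (snd \<omega>) - muh \<omega> j))^2 \<le> (norm (f (snd \<omega>) - muh \<omega> i))^2}" for j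
    have fc: "(\<lambda>\<omega>. f (fst \<omega> c s)) \<in> borel_measurable ?O" if "c < C" "s < m" for c s
    proof -
      have a: "fst \<in> measurable ?O (PiM {..<C} (\<lambda>c. PiM {..<m} (\<lambda>s. D c)))"
        unfolding ncc_space_def by (rule measurable_fst)
      have b: "(\<lambda>y. y c) \<in> measurable (PiM {..<C} (\<lambda>c. PiM {..<m} (\<lambda>s. D c))) (PiM {..<m} (\<lambda>s. D c))"
        using that by (intro measurable_component_singleton) auto
      have cc: "(\<lambda>x. x s) \<in> measurable (PiM {..<m} (\<lambda>s. D c)) (D c)"
        using that by (intro measurable_component_singleton) auto
      have "(\<lambda>\<omega>. fst \<omega> c s) \<in> measurable ?O (D c)"
        using measurable_compose[OF measurable_compose[OF a b] cc] by simp
      thus ?thesis using fm[OF that(1)] by (rule measurable_compose)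
    qed
    have mu_m: "(\<lambda>\<omega>. muh \<omega> c) \<in> borel_measurable ?O" if "c < C" for c
      unfolding muh_def using fc that
      by (intro borel_measurable_scaleR borel_measurable_sum) auto
    have fz: "(\<lambda>\<omega>. f (snd \<omega>)) \<in> borel_measurable ?O"
      unfolding ncc_space_def by (rule measurable_compose[OF measurable_snd fm[OF i]])
    have Es: "E j \<in> sets ?O" if "j < C" for j
    proof -
      note [measurable] = mu_m[OF that] mu_m[OF i] fz
      show ?thesis unfolding E_def by measurable
    qed
    have sub: "{\<omega> \<in> space ?O. ncc_pred C tb (muh \<omega>) (f (snd \<omega>)) \<noteq> i} \<subseteq> (\<Union>j\<in>{..<C} - {i}. E j)"
    proof safe
      fix \<omega> assume om: "\<omega> \<in> space ?O" and ne: "ncc_pred C tb (muh \<omega>) (f (snd \<omega>)) \<noteq> i"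
      define F where "F c = (norm (f (snd \<omega>) - muh \<omega> c))^2" for c
      define Smin where "Smin = {c \<in> {..<C}. \<forall>c'\<in>{..<C}. F c \<le> F c'}"
      have pred: "ncc_pred C tb (muh \<omega>) (f (snd \<omega>)) = tb Smin"
        unfolding ncc_pred_def Smin_def F_def ..
      have "0 \<in> {..<C}" using C2 by simp
      hence fin: "finite (F ` {..<C})" and nem: "F ` {..<C} \<noteq> {}" by auto
      obtain c0 where c0: "c0 \<in> {..<C}" "F c0 = Min (F ` {..<C})"
        using Min_in[OF fin nem] by auto
      have "c0 \<in> Smin" unfolding Smin_def using c0 Min_le[OF fin] by auto
      hence "Smin \<noteq> {}" by auto
      moreover have "Smin \<subseteq> {..<C}" unfolding Smin_def by auto
      ultimately have tS: "tb Smin \<in> Smin" by (rule tb)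
      define j where "j = tb Smin"
      have j: "j < C" "j \<noteq> i" "F j \<le> F i" using tS ne i unfolding j_def pred Smin_def by auto
      show "\<omega> \<in> (\<Union>j\<in>{..<C} - {i}. E j)"
        using j om unfolding E_def F_def by auto
    qed
    have "measure ?O {\<omega> \<in> space ?O. ncc_pred C tb (muh \<omega>) (f (snd \<omega>)) \<noteq> i}
        \<le> measure ?O (\<Union>j\<in>{..<C} - {i}. E j)"
      by (rule O.finite_measure_mono[OF sub]) (use Es in auto)
    also have "\<dots> \<le> (\<Sum>j\<in>{..<C} - {i}. measure ?O (E j))"
      by (rule O.finite_measure_subadditive_finite) (use Es in auto)
    also have "\<dots> \<le> (\<Sum>j\<in>{..<C} - {i}. T1 i j + T2 i j)"
    proof (rule sum_mono)
      fix j assume j: "j \<in> {..<C} - {i}"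
      show "measure ?O (E j) \<le> T1 i j + T2 i j"
        unfolding E_def muh_def T1_def T2_def
        by (rule pair_bound[OF m10 prob sets_D f_meas fourth i]) (use j sep gap i in auto)
    qed
    finally show ?thesis .
  qed
  have "ncc_err C m D f tb = (1 / real C) * (\<Sum>i<C. measure (ncc_space C m D i)
        {\<omega> \<in> space (ncc_space C m D i). ncc_pred C tb (muh \<omega>) (f (snd \<omega>)) \<noteq> i})"
    unfolding ncc_err_def muh_def ..
  also have "\<dots> \<le> (1 / real C) * (\<Sum>i<C. \<Sum>j\<in>{..<C} - {i}. T1 i j + T2 i j)"
    by (intro mult_left_mono sum_mono per_i) auto
  also have "\<dots> = (1 / real C) * (\<Sum>i<C. \<Sum>j\<in>{..<C} - {i}. T1 i j) + (1 / real C) * (\<Sum>i<C. \<Sum>j\<in>{..<C} - {i}. T2 i j)"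
    by (simp add: sum.distrib distrib_left)
  finally show ?thesis unfolding T1_def T2_def .
qed

end
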